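(* Let $n\in\mathbb N$, let $p$ be a positive even integer, and let $\mathcal S\subseteq\mathbb S^n$. Let $A_{i_1,\dots,i_p}$, $(i_1,\dots,i_p)\in\{1,\dots,n\}^p$, be independent standard normal random variables and let $\mathbf g\in\mathbb R^n$ have independent standard normal entries. For $c_3>0$ define $$\xi_u^0(p;\mathcal S,n,c_3)=\frac{\sqrt p}{\sqrt n}\left(-\frac{c_3}{2}(p-1)+\frac{1}{c_3}\log\Big(\mathbb E\,e^{c_3\sqrt p\max_{\mathbf x\in\mathcal S}\mathbf g^T\mathbf x}\Big)\right),$$ $$\xi_l^0(p;\mathcal S,n,c_3)=\frac{\sqrt p}{\sqrt n}\,\frac{1}{c_3}\log\Big(\mathbb E\,e^{c_3\max_{\mathbf x\in\mathcal S}\sum_{i_1,\dots,i_p=1}^nA_{i_1,\dots,i_p}\prod_{k=1}^p\mathbf x_{i_k}}\Big).$$ Then $\xi_l^0(p;\mathcal S,n,c_3)\le\xi_u^0(p;\mathcal S,n,c_3)$ for every $c_3>0$.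
   Context: $\mathbb S^n=\{\mathbf x\in\mathbb R^n:\|\mathbf x\|_2=1\}$, and $\mathbf x_i$ denotes the $i$-th coordinate of $\mathbf x$. *)

theory Defs
  imports "HOL-Probability.Probability"
begin

definition std_normal :: "real measure" where
  "std_normal = density lborel std_normal_density"

text \<open>Upper quantity; here n = CARD('n), g has iid standard normal entries,
  and the maximum over S is taken as a supremum.\<close>
definition xi_u0 :: "nat \<Rightarrow> (real ^ 'n::finite) set \<Rightarrow> real \<Rightarrow> real" where
  "xi_u0 p S c3 =
     sqrt (real p) / sqrt (real CARD('n)) *
     ( - (c3 / 2) * (real p - 1)
       + (1 / c3) * ln (\<integral>g. exp (c3 * sqrt (real p) *
                          (SUP x\<in>S. (\<Sum>i\<in>UNIV. g i * x $ i)))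
                        \<partial>(PiM (UNIV :: 'n set) (\<lambda>_. std_normal))))"

text \<open>Lower quantity; the Gaussian tensor A is indexed by tuples
  (i_1,...,i_p), represented as extensional maps {..<p} \<rightarrow> 'n.\<close>
definition xi_l0 :: "nat \<Rightarrow> (real ^ 'n::finite) set \<Rightarrow> real \<Rightarrow> real" where
  "xi_l0 p S c3 =
     sqrt (real p) / sqrt (real CARD('n)) *
     ((1 / c3) * ln (\<integral>A. exp (c3 *
                          (SUP x\<in>S. (\<Sum>\<iota>\<in>PiE {..<p} (\<lambda>_. UNIV :: 'n set).
                                        A \<iota> * (\<Prod>k<p. x $ \<iota> k))))
                        \<partial>(PiM (PiE {..<p} (\<lambda>_. UNIV :: 'n set)) (\<lambda>_. std_normal))))"

end

theory Submission
  imports Defs "HOL-Real_Asymp.Real_Asymp"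
begin

lemma prob_space_std_normal: "prob_space std_normal"
  unfolding std_normal_def by (rule prob_space_normal_density) simp

lemma std_normal_exp_shift:
  "std_normal_density y * exp (L * y) = exp (L^2/2) * normal_density L 1 y"
  unfolding normal_density_def by (simp add: exp_add[symmetric] power2_eq_square field_simps)

lemma integrable_std_exp_abs:
  "integrable lborel (\<lambda>y. std_normal_density y * exp (L * \<bar>y\<bar>))"
proof (rule Bochner_Integration.integrable_bound)
  show "integrable lborel (\<lambda>y. exp (L^2/2) * normal_density L 1 y + exp ((-L)^2/2) * normal_density (-L) 1 y)"
    by auto
  show "(\<lambda>y. std_normal_density y * exp (L * \<bar>y\<bar>)) \<in> borel_measurable lborel" by measurable
  show "AE y in lborel. norm (std_normal_density y * exp (L * \<bar>y\<bar>))
          \<le> norm (exp (L^2/2) * normal_density L 1 y + exp ((-L)^2/2) * normal_density (-L) 1 y)"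
  proof (intro AE_I2)
    fix y :: real
    have "std_normal_density y * exp (L * \<bar>y\<bar>) \<le> std_normal_density y * exp (L * y) + std_normal_density y * exp ((-L) * y)"
      by (cases "y \<ge> 0") (auto simp: add_nonneg_nonneg)
    also have "\<dots> = exp (L^2/2) * normal_density L 1 y + exp ((-L)^2/2) * normal_density (-L) 1 y"
      by (simp only: std_normal_exp_shift)
    finally show "norm (std_normal_density y * exp (L * \<bar>y\<bar>))
          \<le> norm (exp (L^2/2) * normal_density L 1 y + exp ((-L)^2/2) * normal_density (-L) 1 y)"
      by (simp add: add_nonneg_nonneg)
  qed
qed

lemma integrable_std_normal_iff:
  assumes "f \<in> borel_measurable borel"
  shows "integrable std_normal f \<longleftrightarrow> integrable lborel (\<lambda>y. std_normal_density y * f y)"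
  unfolding std_normal_def
  by (subst integrable_density) (use assms in auto)

lemma integral_std_normal:
  assumes "f \<in> borel_measurable borel"
  shows "integral\<^sup>L std_normal f = integral\<^sup>L lborel (\<lambda>y. std_normal_density y * f y)"
  unfolding std_normal_def
  by (subst integral_density) (use assms in auto)

lemma sets_std_normal[measurable_cong, simp]: "sets std_normal = sets borel"
  unfolding std_normal_def by simp

lemma space_std_normal[simp]: "space std_normal = UNIV"
  unfolding std_normal_def by simp

lemma integrable_std_normal_exp_abs: "integrable std_normal (\<lambda>y. exp (L * \<bar>y\<bar>))"
  by (subst integrable_std_normal_iff) (auto intro: integrable_std_exp_abs)

lemma std_normal_mgf: "integral\<^sup>L std_normal (\<lambda>y. exp (t * y)) = exp (t^2/2)"
proof -
  have "integral\<^sup>L std_normal (\<lambda>y. exp (t * y)) = integral\<^sup>L lborel (\<lambda>y. exp (t^2/2) * normal_density t 1 y)"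
    by (subst integral_std_normal, measurable) (simp only: std_normal_exp_shift)
  also have "\<dots> = exp (t^2/2)" by simp
  finally show ?thesis .
qed

lemma std_normal_density_deriv:
  "(std_normal_density has_real_derivative (- y * std_normal_density y)) (at y)"
  unfolding std_normal_density_def
  by (auto intro!: derivative_eq_intros simp: power2_eq_square field_simps)

lemma abs_le_exp_abs: "\<bar>y::real\<bar> \<le> exp \<bar>y\<bar>"
  using exp_ge_add_one_self[of "\<bar>y\<bar>"] by linarith

lemma gauss_ibp_1d:
  fixes g g' :: "real \<Rightarrow> real" and K L :: real
  assumes deriv: "\<And>y. (g has_real_derivative g' y) (at y)"
      and cont: "\<And>y. isCont g' y"
      and bg: "\<And>y. \<bar>g y\<bar> \<le> K * exp (L * \<bar>y\<bar>)"
      and bg': "\<And>y. \<bar>g' y\<bar> \<le> K * exp (L * \<bar>y\<bar>)"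
  shows "integrable std_normal (\<lambda>y. y * g y)" "integrable std_normal g'"
    "integral\<^sup>L std_normal (\<lambda>y. y * g y) = integral\<^sup>L std_normal g'"
proof -
  let ?p = std_normal_density
  have K0: "0 \<le> K" using bg[of 0] abs_ge_zero[of "g 0"] by simp
  have gc: "continuous_on UNIV g"
    using deriv by (meson DERIV_isCont continuous_at_imp_continuous_on)
  have gc': "continuous_on UNIV g'"
    using cont by (simp add: continuous_at_imp_continuous_on)
  have gm[measurable]: "g \<in> borel_measurable borel"
    using gc by (rule borel_measurable_continuous_onI)
  have gm'[measurable]: "g' \<in> borel_measurable borel"
    using gc' by (rule borel_measurable_continuous_onI)
  define L' where "L' = \<bar>L\<bar> + 1"
  have dom: "integrable lborel (\<lambda>y. K * (?p y * exp (L' * \<bar>y\<bar>)))"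
    by (intro integrable_mult_right integrable_std_exp_abs)
  have e1: "exp (L * \<bar>y\<bar>) \<le> exp (L' * \<bar>y\<bar>)" for y
    unfolding L'_def by (auto intro!: mult_right_mono simp: abs_mult[symmetric])
  have e2: "\<bar>y\<bar> * exp (L * \<bar>y\<bar>) \<le> exp (L' * \<bar>y\<bar>)" for y
  proof -
    have "\<bar>y\<bar> * exp (L * \<bar>y\<bar>) \<le> exp \<bar>y\<bar> * exp (\<bar>L\<bar> * \<bar>y\<bar>)"
      by (intro mult_mono abs_le_exp_abs) (auto intro!: mult_right_mono)
    also have "\<dots> = exp (L' * \<bar>y\<bar>)" unfolding L'_def by (simp add: exp_add[symmetric] algebra_simps)
    finally show ?thesis .
  qed
  have i1: "integrable lborel (\<lambda>y. ?p y * (y * g y))"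
  proof (rule Bochner_Integration.integrable_bound[OF dom])
    show "AE y in lborel. norm (?p y * (y * g y)) \<le> norm (K * (?p y * exp (L' * \<bar>y\<bar>)))"
    proof (intro AE_I2)
      fix y
      have "\<bar>y * g y\<bar> \<le> \<bar>y\<bar> * (K * exp (L * \<bar>y\<bar>))"
        by (simp add: abs_mult mult_left_mono bg)
      also have "\<dots> = K * (\<bar>y\<bar> * exp (L * \<bar>y\<bar>))" by simp
      also have "\<dots> \<le> K * exp (L' * \<bar>y\<bar>)" by (rule mult_left_mono[OF e2 K0])
      finally have "\<bar>y * g y\<bar> \<le> K * exp (L' * \<bar>y\<bar>)" .
      then have "?p y * \<bar>y * g y\<bar> \<le> ?p y * (K * exp (L' * \<bar>y\<bar>))"
        by (rule mult_left_mono) simp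
      then show "norm (?p y * (y * g y)) \<le> norm (K * (?p y * exp (L' * \<bar>y\<bar>)))"
        using K0 by (simp add: abs_mult mult_ac)
    qed
  qed measurable
  have i2: "integrable lborel (\<lambda>y. ?p y * g' y)"
  proof (rule Bochner_Integration.integrable_bound[OF dom])
    show "AE y in lborel. norm (?p y * g' y) \<le> norm (K * (?p y * exp (L' * \<bar>y\<bar>)))"
    proof (intro AE_I2)
      fix y
      have "\<bar>g' y\<bar> \<le> K * exp (L' * \<bar>y\<bar>)"
        using bg'[of y] mult_left_mono[OF e1[of y] K0] by linarith
      then have "?p y * \<bar>g' y\<bar> \<le> ?p y * (K * exp (L' * \<bar>y\<bar>))"
        by (rule mult_left_mono) simp
      then show "norm (?p y * g' y) \<le> norm (K * (?p y * exp (L' * \<bar>y\<bar>)))"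
        using K0 by (simp add: abs_mult mult_ac)
    qed
  qed measurable
  show "integrable std_normal (\<lambda>y. y * g y)"
    by (subst integrable_std_normal_iff) (use i1 in auto)
  show "integrable std_normal g'"
    by (subst integrable_std_normal_iff) (use i2 in auto)
  define F where "F y = g y * ?p y" for y
  define f where "f y = ?p y * g' y - ?p y * (y * g y)" for y
  have Fd: "(F has_vector_derivative f y) (at y)" for y
    unfolding F_def f_def has_real_derivative_iff_has_vector_derivative[symmetric]
    by (auto intro!: derivative_eq_intros deriv std_normal_density_deriv simp: algebra_simps)
  have fc: "isCont f y" for y
    unfolding f_def std_normal_density_def
    by (intro continuous_intros cont) (use gc in \<open>auto simp: continuous_on_eq_continuous_at\<close>)
  have fi: "integrable lborel f"
    unfolding f_def using i1 i2 by auto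
  have Fb: "\<bar>F y\<bar> \<le> K / sqrt (2*pi) * exp (L * \<bar>y\<bar> - y^2/2)" for y
  proof -
    have "\<bar>F y\<bar> = \<bar>g y\<bar> * ?p y" unfolding F_def by (simp add: abs_mult)
    also have "\<dots> \<le> K * exp (L * \<bar>y\<bar>) * ?p y" by (intro mult_right_mono bg) simp
    also have "\<dots> = K / sqrt (2*pi) * exp (L * \<bar>y\<bar> - y^2/2)"
    proof -
      have "exp (L * \<bar>y\<bar> - y^2/2) = exp (L * \<bar>y\<bar>) * exp (-(y^2)/2)"
        by (simp add: exp_add[symmetric])
      then show ?thesis unfolding std_normal_density_def by simp
    qed
    finally show ?thesis .
  qed
  have lim_top: "(F \<longlongrightarrow> 0) at_top"
  proof (rule Lim_null_comparison)
    show "\<forall>\<^sub>F y in at_top. norm (F y) \<le> K / sqrt (2*pi) * exp (L * y - y^2/2)"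
    proof (rule eventually_mono[OF eventually_ge_at_top[of 0]])
      fix y :: real assume "0 \<le> y" then show "norm (F y) \<le> K / sqrt (2*pi) * exp (L * y - y^2/2)"
        using Fb[of y] by simp
    qed
    show "((\<lambda>y. K / sqrt (2*pi) * exp (L * y - y^2/2)) \<longlongrightarrow> 0) at_top"
      by real_asymp
  qed
  have lim_bot: "(F \<longlongrightarrow> 0) at_bot"
  proof (rule Lim_null_comparison)
    show "\<forall>\<^sub>F y in at_bot. norm (F y) \<le> K / sqrt (2*pi) * exp (- L * y - y^2/2)"
    proof (rule eventually_mono[OF eventually_le_at_bot[of 0]])
      fix y :: real assume "y \<le> 0" then show "norm (F y) \<le> K / sqrt (2*pi) * exp (- L * y - y^2/2)"
        using Fb[of y] by (simp add: abs_of_nonpos)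
    qed
    show "((\<lambda>y. K / sqrt (2*pi) * exp (- L * y - y^2/2)) \<longlongrightarrow> 0) at_bot"
      by real_asymp
  qed
  have "(LBINT y=-\<infinity>..\<infinity>. f y) = 0 - 0"
  proof (rule interval_integral_FTC_integrable[where F=F])
    show "set_integrable lborel (einterval (-\<infinity>) \<infinity>) f"
      using fi by (simp add: set_integrable_def einterval_eq_UNIV)
    show "((F \<circ> real_of_ereal) \<longlongrightarrow> 0) (at_right (-\<infinity>))"
      unfolding at_right_MInf tendsto_compose_filtermap using lim_bot by (simp add: comp_def filtermap_filtermap filtermap_ident)
    show "((F \<circ> real_of_ereal) \<longlongrightarrow> 0) (at_left \<infinity>)"
      unfolding at_left_PInf tendsto_compose_filtermap using lim_top by (simp add: comp_def filtermap_filtermap filtermap_ident)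
  qed (auto intro: Fd fc)
  then have "integral\<^sup>L lborel f = 0"
    by (simp add: interval_lebesgue_integral_def set_lebesgue_integral_def einterval_eq_UNIV)
  then have "integral\<^sup>L lborel (\<lambda>y. ?p y * g' y) = integral\<^sup>L lborel (\<lambda>y. ?p y * (y * g y))"
    unfolding f_def using i1 i2 by simp
  then show "integral\<^sup>L std_normal (\<lambda>y. y * g y) = integral\<^sup>L std_normal g'"
    by (subst (1 2) integral_std_normal) auto
qed

abbreviation gauss :: "'w set \<Rightarrow> ('w \<Rightarrow> real) measure" where
  "gauss W \<equiv> PiM W (\<lambda>_. std_normal)"

lemma product_prob_space_std_normal: "product_prob_space (\<lambda>_::'w. std_normal)"
  by (simp add: product_prob_space_def product_prob_space_axioms_def product_sigma_finite_def
      prob_space_std_normal prob_space_imp_sigma_finite)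

lemma prob_space_gauss: "prob_space (gauss W)"
proof -
  interpret product_prob_space "\<lambda>_::'w. std_normal" by (rule product_prob_space_std_normal)
  show ?thesis by (rule prob_space_PiM) (simp add: prob_space_std_normal)
qed

lemma integrable_gauss_exp:
  assumes "finite W"
  shows "integrable (gauss W) (\<lambda>u. exp (L * (\<Sum>v\<in>W. \<bar>u v\<bar>)))"
proof -
  interpret product_prob_space "\<lambda>_::'w. std_normal" by (rule product_prob_space_std_normal)
  have "integrable (gauss W) (\<lambda>u. \<Prod>v\<in>W. exp (L * \<bar>u v\<bar>))"
    by (rule product_integrable_prod) (use assms integrable_std_normal_exp_abs in auto)
  moreover have "(\<lambda>u. \<Prod>v\<in>W. exp (L * \<bar>u v\<bar>)) = (\<lambda>u. exp (L * (\<Sum>v\<in>W. \<bar>u v\<bar>)))"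
    using assms by (simp add: exp_sum sum_distrib_left)
  ultimately show ?thesis by simp
qed

lemma integrable_gauss_bound:
  assumes "finite W" and [measurable]: "h \<in> borel_measurable (gauss W)"
    and b: "\<And>u. \<bar>h u\<bar> \<le> K * exp (L * (\<Sum>v\<in>W. \<bar>u v\<bar>))"
  shows "integrable (gauss W) h"
proof (rule Bochner_Integration.integrable_bound)
  show "integrable (gauss W) (\<lambda>u. K * exp (L * (\<Sum>v\<in>W. \<bar>u v\<bar>)))"
    using integrable_gauss_exp[OF assms(1)] by auto
  show "AE x in gauss W. norm (h x) \<le> norm (K * exp (L * (\<Sum>v\<in>W. \<bar>x v\<bar>)))"
    using b by (intro AE_I2) (metis abs_ge_zero abs_of_nonneg order.trans real_norm_def)
qed (rule assms)

lemma sum_abs_upd: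
  assumes "finite W" "w \<in> W"
  shows "(\<Sum>v\<in>W. \<bar>(u(w:=y)) v\<bar>) = \<bar>y\<bar> + (\<Sum>v\<in>W-{w}. \<bar>u v\<bar>)"
proof -
  have "W = insert w (W - {w})" using assms by auto
  then have "(\<Sum>v\<in>W. \<bar>(u(w:=y)) v\<bar>) = (\<Sum>v\<in>insert w (W-{w}). \<bar>(u(w:=y)) v\<bar>)" by simp
  also have "\<dots> = \<bar>y\<bar> + (\<Sum>v\<in>W-{w}. \<bar>(u(w:=y)) v\<bar>)"
    using assms by (subst sum.insert) auto
  also have "(\<Sum>v\<in>W-{w}. \<bar>(u(w:=y)) v\<bar>) = (\<Sum>v\<in>W-{w}. \<bar>u v\<bar>)"
    by (rule sum.cong) auto
  finally show ?thesis .
qed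

lemma gauss_ibp:
  fixes f f' :: "('w \<Rightarrow> real) \<Rightarrow> real"
  assumes W: "finite W" "w \<in> W"
    and deriv: "\<And>u y. ((\<lambda>y. f (u(w:=y))) has_real_derivative f' (u(w:=y))) (at y)"
    and cont: "\<And>u y. isCont (\<lambda>y. f' (u(w:=y))) y"
    and [measurable]: "f \<in> borel_measurable (gauss W)" "f' \<in> borel_measurable (gauss W)"
    and bf: "\<And>u. \<bar>f u\<bar> \<le> K * exp (L * (\<Sum>v\<in>W. \<bar>u v\<bar>))"
    and bf': "\<And>u. \<bar>f' u\<bar> \<le> K * exp (L * (\<Sum>v\<in>W. \<bar>u v\<bar>))"
  shows "integral\<^sup>L (gauss W) (\<lambda>u. u w * f u) = integral\<^sup>L (gauss W) f'"
proof -
  interpret product_prob_space "\<lambda>_::'w. std_normal" by (rule product_prob_space_std_normal)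
  define W0 where "W0 = W - {w}"
  have WW: "W = insert w W0" and w0: "w \<notin> W0" and fW0: "finite W0"
    using W unfolding W0_def by auto
  have K0: "0 \<le> K" using bf[of "\<lambda>_. 0"] abs_ge_zero[of "f (\<lambda>_. 0)"] by simp
  define L' where "L' = \<bar>L\<bar> + 1"
  have i1: "integrable (gauss W) (\<lambda>u. u w * f u)"
  proof (rule integrable_gauss_bound[OF W(1), where K=K and L=L'])
    show "(\<lambda>u. u w * f u) \<in> borel_measurable (gauss W)" using W by measurable
    fix u :: "'w \<Rightarrow> real"
    let ?s = "\<Sum>v\<in>W. \<bar>u v\<bar>"
    have s0: "0 \<le> ?s" by (simp add: sum_nonneg)
    have "\<bar>u w\<bar> \<le> ?s" using W by (intro member_le_sum) auto
    then have ws: "\<bar>u w\<bar> \<le> exp ?s" using abs_le_exp_abs[of ?s] s0 by simp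
    have "\<bar>u w * f u\<bar> \<le> exp ?s * (K * exp (L * ?s))"
      unfolding abs_mult by (intro mult_mono ws bf) auto
    also have "\<dots> \<le> K * exp (L' * ?s)"
    proof -
      have "?s + L * ?s \<le> L' * ?s"
        using s0 unfolding L'_def by (simp add: distrib_right mult_right_mono)
      then have e: "exp ?s * exp (L * ?s) \<le> exp (L' * ?s)"
        by (simp only: exp_add[symmetric] exp_le_cancel_iff)
      have "exp ?s * (K * exp (L * ?s)) = K * (exp ?s * exp (L * ?s))" by (simp add: mult_ac)
      also have "\<dots> \<le> K * exp (L' * ?s)" by (rule mult_left_mono[OF e K0])
      finally show ?thesis .
    qed
    finally show "\<bar>u w * f u\<bar> \<le> K * exp (L' * ?s)" .
  qed
  have i2: "integrable (gauss W) f'"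
    by (rule integrable_gauss_bound[OF W(1) _ bf']) measurable
  have "integral\<^sup>L (gauss W) (\<lambda>u. u w * f u)
      = (\<integral>x. (\<integral>y. (x(w:=y)) w * f (x(w:=y)) \<partial>std_normal) \<partial>gauss W0)"
  proof -
    have i1': "integrable (gauss (insert w W0)) (\<lambda>u. u w * f u)" using i1 WW by simp
    show ?thesis unfolding WW by (rule product_integral_insert[OF fW0 w0 i1'])
  qed
  also have "\<dots> = (\<integral>x. (\<integral>y. f' (x(w:=y)) \<partial>std_normal) \<partial>gauss W0)"
  proof (rule Bochner_Integration.integral_cong[OF refl])
    fix x :: "'w \<Rightarrow> real"
    let ?C = "K * exp (L * (\<Sum>v\<in>W-{w}. \<bar>x v\<bar>))"
    have b1: "\<bar>f (x(w:=y))\<bar> \<le> ?C * exp (L * \<bar>y\<bar>)" for y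
      using bf[of "x(w:=y)"] unfolding sum_abs_upd[OF W] by (simp add: algebra_simps exp_add)
    have b2: "\<bar>f' (x(w:=y))\<bar> \<le> ?C * exp (L * \<bar>y\<bar>)" for y
      using bf'[of "x(w:=y)"] unfolding sum_abs_upd[OF W] by (simp add: algebra_simps exp_add)
    have "(\<integral>y. y * f (x(w:=y)) \<partial>std_normal) = (\<integral>y. f' (x(w:=y)) \<partial>std_normal)"
      by (rule gauss_ibp_1d(3)[of "\<lambda>y. f (x(w:=y))" "\<lambda>y. f' (x(w:=y))" ?C L, OF deriv cont b1 b2])
    then show "(\<integral>y. (x(w:=y)) w * f (x(w:=y)) \<partial>std_normal) = (\<integral>y. f' (x(w:=y)) \<partial>std_normal)"
      by simp
  qed
  also have "\<dots> = integral\<^sup>L (gauss W) f'"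
  proof -
    have i2': "integrable (gauss (insert w W0)) f'" using i2 WW by simp
    show ?thesis unfolding WW by (rule product_integral_insert[OF fW0 w0 i2', symmetric])
  qed
  finally show ?thesis .
qed

definition SS :: "'j set \<Rightarrow> real \<Rightarrow> ('j \<Rightarrow> real) \<Rightarrow> real" where
  "SS J \<beta> z = (\<Sum>j\<in>J. exp (\<beta> * z j))"
definition HH :: "'j set \<Rightarrow> real \<Rightarrow> real \<Rightarrow> ('j \<Rightarrow> real) \<Rightarrow> real" where
  "HH J \<beta> r z = exp (r * ln (SS J \<beta> z))"
definition PP :: "'j set \<Rightarrow> real \<Rightarrow> ('j \<Rightarrow> real) \<Rightarrow> 'j \<Rightarrow> real" where
  "PP J \<beta> z k = exp (\<beta> * z k) / SS J \<beta> z"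
definition GG :: "'j set \<Rightarrow> real \<Rightarrow> real \<Rightarrow> ('j \<Rightarrow> real) \<Rightarrow> 'j \<Rightarrow> real" where
  "GG J \<beta> r z k = r * \<beta> * HH J \<beta> r z * PP J \<beta> z k"
definition DG :: "'j set \<Rightarrow> real \<Rightarrow> real \<Rightarrow> ('j \<Rightarrow> real) \<Rightarrow> 'j \<Rightarrow> 'j \<Rightarrow> real" where
  "DG J \<beta> r z j k = r * \<beta>^2 * HH J \<beta> r z * PP J \<beta> z j * ((if j = k then 1 else 0) + (r - 1) * PP J \<beta> z k)"

lemma SS_pos: "finite J \<Longrightarrow> J \<noteq> {} \<Longrightarrow> 0 < SS J \<beta> z"
  unfolding SS_def by (intro sum_pos) auto

lemma HH_pos: "0 < HH J \<beta> r z"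
  unfolding HH_def by simp

lemma PP_nonneg: "finite J \<Longrightarrow> J \<noteq> {} \<Longrightarrow> 0 \<le> PP J \<beta> z k"
  unfolding PP_def using SS_pos[of J \<beta> z] by simp

lemma PP_le1: "finite J \<Longrightarrow> k \<in> J \<Longrightarrow> PP J \<beta> z k \<le> 1"
proof -
  assume J: "finite J" "k \<in> J"
  then have "exp (\<beta> * z k) \<le> SS J \<beta> z"
    unfolding SS_def by (intro member_le_sum) auto
  moreover have "0 < SS J \<beta> z" using J SS_pos[of J] by auto
  ultimately show ?thesis unfolding PP_def by simp
qed

lemma SS_deriv:
  assumes "\<And>k. k \<in> J \<Longrightarrow> ((\<lambda>y. z y k) has_real_derivative z' k) (at y0 within X)"
  shows "((\<lambda>y. SS J \<beta> (z y)) has_real_derivative (\<Sum>k\<in>J. \<beta> * exp (\<beta> * z y0 k) * z' k)) (at y0 within X)"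
  unfolding SS_def
  by (rule DERIV_sum) (auto intro!: derivative_eq_intros assms simp: mult_ac)

lemma HH_deriv:
  assumes J: "finite J" "J \<noteq> {}"
    and d: "\<And>k. k \<in> J \<Longrightarrow> ((\<lambda>y. z y k) has_real_derivative z' k) (at y0 within X)"
  shows "((\<lambda>y. HH J \<beta> r (z y)) has_real_derivative (\<Sum>k\<in>J. GG J \<beta> r (z y0) k * z' k)) (at y0 within X)"
proof -
  let ?S0 = "SS J \<beta> (z y0)"
  let ?S' = "\<Sum>k\<in>J. \<beta> * exp (\<beta> * z y0 k) * z' k"
  have S0: "0 < ?S0" by (rule SS_pos[OF J])
  have "((\<lambda>y. exp (r * ln (SS J \<beta> (z y)))) has_real_derivative exp (r * ln ?S0) * (r * (?S' / ?S0))) (at y0 within X)"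
    by (auto intro!: derivative_eq_intros SS_deriv d simp: S0)
  moreover have "exp (r * ln ?S0) * (r * (?S' / ?S0)) = (\<Sum>k\<in>J. GG J \<beta> r (z y0) k * z' k)"
    unfolding GG_def PP_def HH_def
    by (simp add: sum_distrib_left sum_divide_distrib mult_ac)
  ultimately show ?thesis unfolding HH_def by simp
qed

lemma GG_deriv:
  assumes J: "finite J" "J \<noteq> {}"
    and d: "\<And>k. k \<in> J \<Longrightarrow> ((\<lambda>y. z y k) has_real_derivative z' k) (at y0 within X)"
    and j: "j \<in> J"
  shows "((\<lambda>y. GG J \<beta> r (z y) j) has_real_derivative (\<Sum>k\<in>J. DG J \<beta> r (z y0) j k * z' k)) (at y0 within X)"
proof -
  let ?S0 = "SS J \<beta> (z y0)"
  let ?H0 = "HH J \<beta> r (z y0)"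
  let ?S' = "\<Sum>k\<in>J. \<beta> * exp (\<beta> * z y0 k) * z' k"
  let ?H' = "\<Sum>k\<in>J. GG J \<beta> r (z y0) k * z' k"
  let ?e = "exp (\<beta> * z y0 j)"
  have S0: "0 < ?S0" by (rule SS_pos[OF J])
  have GGe: "GG J \<beta> r (z y) j = r * \<beta> * (HH J \<beta> r (z y) * exp (\<beta> * z y j) / SS J \<beta> (z y))" for y
    unfolding GG_def PP_def by simp
  have "((\<lambda>y. r * \<beta> * (HH J \<beta> r (z y) * exp (\<beta> * z y j) / SS J \<beta> (z y))) has_real_derivative
      r * \<beta> * (((?H' * ?e + ?H0 * (?e * (\<beta> * z' j))) * ?S0 - ?H0 * ?e * ?S') / (?S0 * ?S0))) (at y0 within X)"
    using S0 by (auto intro!: derivative_eq_intros SS_deriv HH_deriv d J j simp: power2_eq_square algebra_simps)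
  moreover have "r * \<beta> * (((?H' * ?e + ?H0 * (?e * (\<beta> * z' j))) * ?S0 - ?H0 * ?e * ?S') / (?S0 * ?S0))
      = (\<Sum>k\<in>J. DG J \<beta> r (z y0) j k * z' k)"
  proof -
    have "(\<Sum>k\<in>J. DG J \<beta> r (z y0) j k * z' k)
        = (\<Sum>k\<in>J. r * \<beta>^2 * ?H0 * (?e / ?S0) * (if j = k then z' k else 0))
          + (\<Sum>k\<in>J. r * \<beta>^2 * ?H0 * (?e / ?S0) * ((r - 1) * (exp (\<beta> * z y0 k) / ?S0) * z' k))"
      unfolding DG_def PP_def sum.distrib[symmetric]
      by (rule sum.cong) (auto simp: algebra_simps)
    also have "(\<Sum>k\<in>J. r * \<beta>^2 * ?H0 * (?e / ?S0) * (if j = k then z' k else 0)) = r * \<beta>^2 * ?H0 * (?e / ?S0) * z' j"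
      using J j by (simp add: if_distrib[of "\<lambda>x. _ * x"] sum.delta cong: if_cong)
    also have "(\<Sum>k\<in>J. r * \<beta>^2 * ?H0 * (?e / ?S0) * ((r - 1) * (exp (\<beta> * z y0 k) / ?S0) * z' k))
        = r * \<beta> * (?e / ?S0) * (r - 1) / ?S0 * (\<Sum>k\<in>J. \<beta> * ?H0 * exp (\<beta> * z y0 k) * z' k)"
      by (simp add: sum_distrib_left sum_divide_distrib power2_eq_square mult_ac)
    finally have A: "(\<Sum>k\<in>J. DG J \<beta> r (z y0) j k * z' k) = r * \<beta>^2 * ?H0 * (?e / ?S0) * z' j
        + r * \<beta> * (?e / ?S0) * (r - 1) / ?S0 * (\<Sum>k\<in>J. \<beta> * ?H0 * exp (\<beta> * z y0 k) * z' k)" .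
    have B: "?H' = r / ?S0 * (\<Sum>k\<in>J. \<beta> * ?H0 * exp (\<beta> * z y0 k) * z' k)"
      unfolding GG_def PP_def by (simp add: sum_distrib_left mult_ac)
    have C: "?H0 * ?S' = (\<Sum>k\<in>J. \<beta> * ?H0 * exp (\<beta> * z y0 k) * z' k)"
      by (simp add: sum_distrib_left mult_ac)
    show ?thesis
      unfolding A B using S0 C[symmetric]
      by (simp add: field_simps power2_eq_square)
  qed
  ultimately show ?thesis unfolding GGe by simp
qed

lemma SS_le_Max:
  assumes J: "finite J" "J \<noteq> {}" and b: "0 < \<beta>"
  shows "SS J \<beta> z \<le> card J * exp (\<beta> * Max (z ` J))"
proof -
  have "SS J \<beta> z \<le> (\<Sum>j\<in>J. exp (\<beta> * Max (z ` J)))"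
    unfolding SS_def using J b by (intro sum_mono) (auto intro!: mult_left_mono)
  then show ?thesis by simp
qed

lemma HH_le_Max:
  assumes J: "finite J" "J \<noteq> {}" and b: "0 < \<beta>" and r: "0 \<le> r"
  shows "HH J \<beta> r z \<le> real (card J) powr r * exp (r * \<beta> * Max (z ` J))"
proof -
  have cJ: "0 < real (card J)" using J by (simp add: card_gt_0_iff)
  have "ln (SS J \<beta> z) \<le> ln (card J * exp (\<beta> * Max (z ` J)))"
    using SS_le_Max[OF J b, of z] SS_pos[OF J] cJ by (subst ln_le_cancel_iff) auto
  also have "\<dots> = ln (card J) + \<beta> * Max (z ` J)"
    using cJ by (simp add: ln_mult)
  finally have "r * ln (SS J \<beta> z) \<le> r * (ln (card J) + \<beta> * Max (z ` J))"
    using r by (rule mult_left_mono)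
  then have "HH J \<beta> r z \<le> exp (r * (ln (card J) + \<beta> * Max (z ` J)))"
    unfolding HH_def by simp
  also have "\<dots> = real (card J) powr r * exp (r * \<beta> * Max (z ` J))"
    using cJ by (simp add: powr_def exp_add[symmetric] algebra_simps)
  finally show ?thesis .
qed

lemma HH_ge:
  assumes J: "finite J" "j \<in> J" and r: "0 \<le> r"
  shows "exp (r * \<beta> * z j) \<le> HH J \<beta> r z"
proof -
  have "exp (\<beta> * z j) \<le> SS J \<beta> z" unfolding SS_def using J by (intro member_le_sum) auto
  moreover have "0 < SS J \<beta> z" using SS_pos[of J \<beta> z] J by auto
  ultimately have "ln (exp (\<beta> * z j)) \<le> ln (SS J \<beta> z)" by (subst ln_le_cancel_iff) auto
  then have "r * (\<beta> * z j) \<le> r * ln (SS J \<beta> z)" using r by (simp add: mult_left_mono)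
  then show ?thesis unfolding HH_def by (simp add: mult_ac)
qed

lemma HH_bound:
  assumes J: "finite J" "J \<noteq> {}" and b: "0 < \<beta>" and r: "0 \<le> r" "r \<le> 1"
    and zT: "\<And>j. j \<in> J \<Longrightarrow> \<bar>z j\<bar> \<le> T"
  shows "HH J \<beta> r z \<le> real (card J) * exp (\<beta> * T)"
proof -
  have c1: "1 \<le> real (card J)" using J by (simp add: Suc_leI card_gt_0_iff)
  have M: "Max (z ` J) \<le> T" using J zT by (auto simp: Max_le_iff abs_le_iff)
  have "HH J \<beta> r z \<le> real (card J) powr r * exp (r * \<beta> * Max (z ` J))"
    by (rule HH_le_Max[OF J b r(1)])
  also have "\<dots> \<le> real (card J) * exp (\<beta> * T)"
  proof (rule mult_mono)
    show "real (card J) powr r \<le> real (card J)"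
      using c1 r powr_mono[of r 1 "real (card J)"] by simp
    have "r * \<beta> * Max (z ` J) \<le> \<beta> * T"
    proof (cases "Max (z ` J) \<le> 0")
      case True
      have "r * \<beta> * Max (z ` J) \<le> 0" using True r b by (simp add: mult_nonneg_nonpos)
      moreover have "0 \<le> T"
      proof -
        from J(2) obtain j0 where "j0 \<in> J" by auto
        then show ?thesis using zT[of j0] by linarith
      qed
      ultimately show ?thesis using b by (simp add: order_trans)
    next
      case False
      have "r * \<beta> * Max (z ` J) \<le> 1 * \<beta> * Max (z ` J)"
        using False r b by (intro mult_right_mono) auto
      also have "\<dots> \<le> \<beta> * T" using M b by simp
      finally show ?thesis .
    qed
    then show "exp (r * \<beta> * Max (z ` J)) \<le> exp (\<beta> * T)" by simp
  qed auto
  finally show ?thesis .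
qed

lemma GG_bound:
  assumes J: "finite J" "J \<noteq> {}" "k \<in> J" and b: "0 < \<beta>" and r: "0 \<le> r" "r \<le> 1"
  shows "\<bar>GG J \<beta> r z k\<bar> \<le> \<beta> * HH J \<beta> r z"
proof -
  have p: "0 \<le> PP J \<beta> z k" "PP J \<beta> z k \<le> 1" using PP_nonneg[OF J(1,2)] PP_le1[OF J(1,3)] by auto
  have "\<bar>GG J \<beta> r z k\<bar> = r * \<beta> * HH J \<beta> r z * PP J \<beta> z k"
    unfolding GG_def using p r b HH_pos[of J \<beta> r z] by (simp add: abs_mult)
  also have "\<dots> \<le> 1 * \<beta> * HH J \<beta> r z * 1"
    using p r b HH_pos[of J \<beta> r z] by (intro mult_mono) auto
  finally show ?thesis by simp
qed

lemma DG_bound: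
  assumes J: "finite J" "J \<noteq> {}" "j \<in> J" "k \<in> J" and b: "0 < \<beta>" and r: "0 \<le> r" "r \<le> 1"
  shows "\<bar>DG J \<beta> r z j k\<bar> \<le> \<beta>^2 * HH J \<beta> r z"
proof -
  have p: "0 \<le> PP J \<beta> z j" "PP J \<beta> z j \<le> 1" using PP_nonneg[OF J(1,2)] PP_le1[OF J(1,3)] by auto
  have q: "0 \<le> PP J \<beta> z k" "PP J \<beta> z k \<le> 1" using PP_nonneg[OF J(1,2)] PP_le1[OF J(1,4)] by auto
  have t: "\<bar>(if j = k then 1 else 0) + (r - 1) * PP J \<beta> z k\<bar> \<le> 1"
  proof -
    have "0 \<le> (1 - r) * PP J \<beta> z k" "(1 - r) * PP J \<beta> z k \<le> 1"
      using q r by (auto intro: mult_le_one)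
    then show ?thesis by (auto simp: algebra_simps)
  qed
  have "\<bar>DG J \<beta> r z j k\<bar> = r * \<beta>^2 * HH J \<beta> r z * PP J \<beta> z j * \<bar>(if j = k then 1 else 0) + (r - 1) * PP J \<beta> z k\<bar>"
    unfolding DG_def using p r b HH_pos[of J \<beta> r z] by (simp add: abs_mult)
  also have "\<dots> \<le> 1 * \<beta>^2 * HH J \<beta> r z * 1 * 1"
    using p r b t HH_pos[of J \<beta> r z] by (intro mult_mono) auto
  finally show ?thesis by simp
qed

lemma DG_offdiag:
  assumes J: "finite J" "J \<noteq> {}" "j \<in> J" "k \<in> J" "j \<noteq> k" and b: "0 < \<beta>" and r: "0 \<le> r" "r \<le> 1"
  shows "DG J \<beta> r z j k \<le> 0"
proof -
  have p: "0 \<le> PP J \<beta> z j" "0 \<le> PP J \<beta> z k" using PP_nonneg[OF J(1,2)] by auto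
  have "DG J \<beta> r z j k = - ((r * \<beta>^2 * HH J \<beta> r z * PP J \<beta> z j) * ((1 - r) * PP J \<beta> z k))"
    unfolding DG_def using J by (simp add: algebra_simps)
  also have "\<dots> \<le> 0" using p r b HH_pos[of J \<beta> r z] by (intro neg_le_0_iff_le[THEN iffD2] mult_nonneg_nonneg) auto
  finally show ?thesis .
qed

definition lin :: "'w set \<Rightarrow> ('w \<Rightarrow> real) \<Rightarrow> ('w \<Rightarrow> real) \<Rightarrow> real" where
  "lin W c u = (\<Sum>w\<in>W. c w * u w)"

lemma lin_measurable[measurable]:
  "(\<lambda>u. lin W c u) \<in> borel_measurable (gauss W)"
  unfolding lin_def by (intro borel_measurable_sum) measurable

lemma lin_measurable_pair[measurable]:
  "(\<lambda>p. lin W (c (fst p)) (snd p)) \<in> borel_measurable (M \<Otimes>\<^sub>M gauss W)"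
  if [measurable]: "\<And>w. w \<in> W \<Longrightarrow> (\<lambda>x. c x w) \<in> borel_measurable M"
  unfolding lin_def by (intro borel_measurable_sum) measurable

lemma lin_bound:
  assumes "\<And>w. w \<in> W \<Longrightarrow> \<bar>c w\<bar> \<le> N"
  shows "\<bar>lin W c u\<bar> \<le> N * (\<Sum>w\<in>W. \<bar>u w\<bar>)"
proof -
  have "\<bar>lin W c u\<bar> \<le> (\<Sum>w\<in>W. \<bar>c w\<bar> * \<bar>u w\<bar>)"
    unfolding lin_def by (rule order_trans[OF sum_abs]) (simp add: abs_mult)
  also have "\<dots> \<le> (\<Sum>w\<in>W. N * \<bar>u w\<bar>)"
    by (intro sum_mono mult_right_mono assms) auto
  finally show ?thesis by (simp add: sum_distrib_left)
qed

lemma lin_upd_deriv: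
  assumes "finite W" "w \<in> W"
  shows "((\<lambda>y. lin W c (u(w:=y))) has_real_derivative c w) (at y0)"
proof -
  have "lin W c (u(w:=y)) = c w * y + (\<Sum>v\<in>W-{w}. c v * u v)" for y
  proof -
    have "W = insert w (W - {w})" using assms by auto
    then have "lin W c (u(w:=y)) = (\<Sum>v\<in>insert w (W-{w}). c v * (u(w:=y)) v)"
      unfolding lin_def by simp
    also have "\<dots> = c w * y + (\<Sum>v\<in>W-{w}. c v * (u(w:=y)) v)"
      using assms by (subst sum.insert) auto
    also have "(\<Sum>v\<in>W-{w}. c v * (u(w:=y)) v) = (\<Sum>v\<in>W-{w}. c v * u v)"
      by (rule sum.cong) auto
    finally show ?thesis .
  qed
  then show ?thesis by (auto intro!: derivative_eq_intros)
qed

lemma lin_upd_cont: "isCont (\<lambda>y. lin W c (u(w:=y))) y0"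
  unfolding lin_def fun_upd_def
  apply (intro continuous_intros)
  subgoal for v by (cases "v = w") simp_all
  done

lemma SS_cont: "(\<And>k. k \<in> J \<Longrightarrow> isCont (\<lambda>y. z y k) y0) \<Longrightarrow> isCont (\<lambda>y. SS J \<beta> (z y)) y0"
  unfolding SS_def by (intro continuous_intros) auto

lemma HH_cont:
  assumes "finite J" "J \<noteq> {}" "\<And>k. k \<in> J \<Longrightarrow> isCont (\<lambda>y. z y k) y0"
  shows "isCont (\<lambda>y. HH J \<beta> r (z y)) y0"
proof -
  have "SS J \<beta> (z y0) \<noteq> 0" using SS_pos[OF assms(1,2), of \<beta> "z y0"] by simp
  then show ?thesis unfolding HH_def
    by (intro continuous_intros SS_cont assms(3)) auto
qed

lemma PP_cont:
  assumes "finite J" "J \<noteq> {}" "\<And>k. k \<in> J \<Longrightarrow> isCont (\<lambda>y. z y k) y0" "j \<in> J"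
  shows "isCont (\<lambda>y. PP J \<beta> (z y) j) y0"
proof -
  have "SS J \<beta> (z y0) \<noteq> 0" using SS_pos[OF assms(1,2), of \<beta> "z y0"] by simp
  then show ?thesis unfolding PP_def
    by (intro continuous_intros SS_cont assms(3,4)) auto
qed

lemma GG_cont:
  assumes "finite J" "J \<noteq> {}" "\<And>k. k \<in> J \<Longrightarrow> isCont (\<lambda>y. z y k) y0" "j \<in> J"
  shows "isCont (\<lambda>y. GG J \<beta> r (z y) j) y0"
  unfolding GG_def by (intro continuous_intros HH_cont PP_cont assms)

lemma DG_cont:
  assumes "finite J" "J \<noteq> {}" "\<And>k. k \<in> J \<Longrightarrow> isCont (\<lambda>y. z y k) y0" "j \<in> J" "k \<in> J"
  shows "isCont (\<lambda>y. DG J \<beta> r (z y) j k) y0"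
  unfolding DG_def by (intro continuous_intros HH_cont PP_cont assms)

lemma HH_meas[measurable]:
  assumes [measurable]: "\<And>k. (\<lambda>u. Z u k) \<in> borel_measurable M"
  shows "(\<lambda>u. HH J \<beta> r (Z u)) \<in> borel_measurable M"
  unfolding HH_def SS_def by measurable

lemma GG_meas[measurable]:
  assumes [measurable]: "\<And>k. (\<lambda>u. Z u k) \<in> borel_measurable M"
  shows "(\<lambda>u. GG J \<beta> r (Z u) j) \<in> borel_measurable M"
  unfolding GG_def PP_def SS_def by measurable

lemma DG_meas[measurable]:
  assumes [measurable]: "\<And>k. (\<lambda>u. Z u k) \<in> borel_measurable M"
  shows "(\<lambda>u. DG J \<beta> r (Z u) j k) \<in> borel_measurable M"
  unfolding DG_def PP_def SS_def by measurable

locale cmp =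
  fixes W :: "'w set" and J :: "'j set" and a b :: "'j \<Rightarrow> 'w \<Rightarrow> real" and \<beta> r :: real
  assumes fW: "finite W" and fJ: "finite J" and nJ: "J \<noteq> {}"
    and orth: "\<And>j k. j \<in> J \<Longrightarrow> k \<in> J \<Longrightarrow> (\<Sum>w\<in>W. a j w * b k w) = 0"
    and diag: "\<And>j. j \<in> J \<Longrightarrow> (\<Sum>w\<in>W. a j w * a j w) = (\<Sum>w\<in>W. b j w * b j w)"
    and off: "\<And>j k. j \<in> J \<Longrightarrow> k \<in> J \<Longrightarrow> j \<noteq> k \<Longrightarrow> (\<Sum>w\<in>W. b j w * b k w) \<le> (\<Sum>w\<in>W. a j w * a k w)"
    and bpos: "0 < \<beta>" and rpos: "0 < r" and r1: "r \<le> 1"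
begin

definition CC :: "real \<Rightarrow> 'j \<Rightarrow> 'w \<Rightarrow> real" where "CC \<theta> j w = cos \<theta> * a j w + sin \<theta> * b j w"
definition CD :: "real \<Rightarrow> 'j \<Rightarrow> 'w \<Rightarrow> real" where "CD \<theta> j w = - sin \<theta> * a j w + cos \<theta> * b j w"
definition Zt :: "real \<Rightarrow> ('w \<Rightarrow> real) \<Rightarrow> 'j \<Rightarrow> real" where "Zt \<theta> u = (\<lambda>j. lin W (CC \<theta> j) u)"
definition Zd :: "real \<Rightarrow> ('w \<Rightarrow> real) \<Rightarrow> 'j \<Rightarrow> real" where "Zd \<theta> u = (\<lambda>j. lin W (CD \<theta> j) u)"
definition hd :: "real \<Rightarrow> ('w \<Rightarrow> real) \<Rightarrow> real" where
  "hd \<theta> u = (\<Sum>j\<in>J. GG J \<beta> r (Zt \<theta> u) j * Zd \<theta> u j)"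
definition sa :: "('w \<Rightarrow> real) \<Rightarrow> real" where "sa u = (\<Sum>w\<in>W. \<bar>u w\<bar>)"
definition N :: real where "N = (\<Sum>j\<in>J. \<Sum>w\<in>W. \<bar>a j w\<bar> + \<bar>b j w\<bar>)"
definition m :: real where "m = real (card J)"

lemma sa_nonneg: "0 \<le> sa u" unfolding sa_def by (simp add: sum_nonneg)
lemma N_nonneg: "0 \<le> N" unfolding N_def by (simp add: sum_nonneg)
lemma m_ge1: "1 \<le> m" unfolding m_def using fJ nJ by (simp add: Suc_leI card_gt_0_iff)

lemma ab_le_N: "j \<in> J \<Longrightarrow> w \<in> W \<Longrightarrow> \<bar>a j w\<bar> + \<bar>b j w\<bar> \<le> N"
proof -
  assume jw: "j \<in> J" "w \<in> W"
  have "\<bar>a j w\<bar> + \<bar>b j w\<bar> \<le> (\<Sum>w\<in>W. \<bar>a j w\<bar> + \<bar>b j w\<bar>)"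
    using jw fW by (intro member_le_sum) auto
  also have "\<dots> \<le> N" unfolding N_def using jw fJ
    by (intro member_le_sum[where f="\<lambda>j. \<Sum>w\<in>W. \<bar>a j w\<bar> + \<bar>b j w\<bar>"]) (auto intro: sum_nonneg)
  finally show ?thesis .
qed

lemma CC_le_N: "j \<in> J \<Longrightarrow> w \<in> W \<Longrightarrow> \<bar>CC \<theta> j w\<bar> \<le> N"
proof -
  assume jw: "j \<in> J" "w \<in> W"
  have "\<bar>CC \<theta> j w\<bar> \<le> \<bar>cos \<theta>\<bar> * \<bar>a j w\<bar> + \<bar>sin \<theta>\<bar> * \<bar>b j w\<bar>"
    unfolding CC_def by (rule order_trans[OF abs_triangle_ineq]) (simp add: abs_mult)
  also have "\<dots> \<le> 1 * \<bar>a j w\<bar> + 1 * \<bar>b j w\<bar>"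
    by (intro add_mono mult_right_mono) auto
  finally show ?thesis using ab_le_N[OF jw] by simp
qed

lemma CD_le_N: "j \<in> J \<Longrightarrow> w \<in> W \<Longrightarrow> \<bar>CD \<theta> j w\<bar> \<le> N"
proof -
  assume jw: "j \<in> J" "w \<in> W"
  have "\<bar>CD \<theta> j w\<bar> \<le> \<bar>sin \<theta>\<bar> * \<bar>a j w\<bar> + \<bar>cos \<theta>\<bar> * \<bar>b j w\<bar>"
    unfolding CD_def by (rule order_trans[OF abs_triangle_ineq]) (simp add: abs_mult)
  also have "\<dots> \<le> 1 * \<bar>a j w\<bar> + 1 * \<bar>b j w\<bar>"
    by (intro add_mono mult_right_mono) auto
  finally show ?thesis using ab_le_N[OF jw] by simp
qed

lemma Zt_bound: "j \<in> J \<Longrightarrow> \<bar>Zt \<theta> u j\<bar> \<le> N * sa u"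
  unfolding Zt_def sa_def by (rule lin_bound) (rule CC_le_N)

lemma Zd_bound: "j \<in> J \<Longrightarrow> \<bar>Zd \<theta> u j\<bar> \<le> N * sa u"
  unfolding Zd_def sa_def by (rule lin_bound) (rule CD_le_N)

lemma HH_Zt_bound: "HH J \<beta> r (Zt \<theta> u) \<le> m * exp (\<beta> * N * sa u)"
  unfolding m_def using HH_bound[OF fJ nJ bpos _ r1, of "Zt \<theta> u" "N * sa u"] rpos Zt_bound
  by (simp add: mult.assoc)

lemma GG_Zt_bound: "j \<in> J \<Longrightarrow> \<bar>GG J \<beta> r (Zt \<theta> u) j\<bar> \<le> \<beta> * m * exp (\<beta> * N * sa u)"
proof -
  assume j: "j \<in> J"
  have "\<bar>GG J \<beta> r (Zt \<theta> u) j\<bar> \<le> \<beta> * HH J \<beta> r (Zt \<theta> u)"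
    using GG_bound[OF fJ nJ j bpos _ r1] rpos by simp
  also have "\<dots> \<le> \<beta> * (m * exp (\<beta> * N * sa u))"
    using HH_Zt_bound bpos by (intro mult_left_mono) auto
  finally show ?thesis by (simp add: mult.assoc)
qed

lemma DG_Zt_bound: "j \<in> J \<Longrightarrow> k \<in> J \<Longrightarrow> \<bar>DG J \<beta> r (Zt \<theta> u) j k\<bar> \<le> \<beta>^2 * m * exp (\<beta> * N * sa u)"
proof -
  assume jk: "j \<in> J" "k \<in> J"
  have "\<bar>DG J \<beta> r (Zt \<theta> u) j k\<bar> \<le> \<beta>^2 * HH J \<beta> r (Zt \<theta> u)"
    using DG_bound[OF fJ nJ jk bpos _ r1] rpos by simp
  also have "\<dots> \<le> \<beta>^2 * (m * exp (\<beta> * N * sa u))"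
    using HH_Zt_bound by (intro mult_left_mono) auto
  finally show ?thesis by (simp add: mult.assoc)
qed

end

context cmp
begin

lemma Zt_meas[measurable]: "(\<lambda>u. Zt \<theta> u k) \<in> borel_measurable (gauss W)"
  unfolding Zt_def by measurable

lemma Zd_meas[measurable]: "(\<lambda>u. Zd \<theta> u k) \<in> borel_measurable (gauss W)"
  unfolding Zd_def by measurable

lemma Zt_upd_deriv: "w \<in> W \<Longrightarrow> ((\<lambda>y. Zt \<theta> (u(w:=y)) k) has_real_derivative CC \<theta> k w) (at y0)"
  unfolding Zt_def by (rule lin_upd_deriv[OF fW])

lemma Zt_upd_cont: "isCont (\<lambda>y. Zt \<theta> (u(w:=y)) k) y0"
  unfolding Zt_def by (rule lin_upd_cont)

definition Kb :: real where "Kb = \<beta> * m + m * (\<beta>^2 * m * N)"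

lemma f_bound: "j \<in> J \<Longrightarrow> \<bar>GG J \<beta> r (Zt \<theta> u) j\<bar> \<le> Kb * exp ((\<beta> * N) * (\<Sum>v\<in>W. \<bar>u v\<bar>))"
proof -
  assume j: "j \<in> J"
  have "0 \<le> m * (\<beta>^2 * m * N)" using m_ge1 N_nonneg by simp
  then have "\<beta> * m \<le> Kb" unfolding Kb_def by simp
  then have "\<beta> * m * exp (\<beta> * N * sa u) \<le> Kb * exp (\<beta> * N * sa u)"
    by (intro mult_right_mono) auto
  with GG_Zt_bound[OF j, of \<theta> u] have "\<bar>GG J \<beta> r (Zt \<theta> u) j\<bar> \<le> Kb * exp (\<beta> * N * sa u)"
    by (rule order_trans)
  then show ?thesis unfolding sa_def by (simp add: mult.assoc)
qed

lemma f'_bound: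
  assumes j: "j \<in> J" and w: "w \<in> W"
  shows "\<bar>\<Sum>k\<in>J. DG J \<beta> r (Zt \<theta> u) j k * CC \<theta> k w\<bar> \<le> Kb * exp ((\<beta> * N) * (\<Sum>v\<in>W. \<bar>u v\<bar>))"
proof -
  let ?E = "exp (\<beta> * N * sa u)"
  have "\<bar>\<Sum>k\<in>J. DG J \<beta> r (Zt \<theta> u) j k * CC \<theta> k w\<bar> \<le> (\<Sum>k\<in>J. \<bar>DG J \<beta> r (Zt \<theta> u) j k\<bar> * \<bar>CC \<theta> k w\<bar>)"
    by (rule order_trans[OF sum_abs]) (simp add: abs_mult)
  also have "\<dots> \<le> (\<Sum>k\<in>J. (\<beta>^2 * m * ?E) * N)"
    using j w m_ge1 by (intro sum_mono mult_mono DG_Zt_bound CC_le_N) auto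
  also have "\<dots> = m * (\<beta>^2 * m * N) * ?E" unfolding m_def by simp
  also have "\<dots> \<le> Kb * ?E"
  proof -
    have "0 \<le> \<beta> * m" using bpos m_ge1 by simp
    then show ?thesis unfolding Kb_def by (intro mult_right_mono) auto
  qed
  finally show ?thesis unfolding sa_def by (simp add: mult.assoc)
qed

lemma ibp_step:
  assumes j: "j \<in> J" and w: "w \<in> W"
  shows "integral\<^sup>L (gauss W) (\<lambda>u. u w * GG J \<beta> r (Zt \<theta> u) j)
       = integral\<^sup>L (gauss W) (\<lambda>u. \<Sum>k\<in>J. DG J \<beta> r (Zt \<theta> u) j k * CC \<theta> k w)"
proof (rule gauss_ibp[OF fW w])
  fix u :: "'w \<Rightarrow> real" and y :: real
  show "((\<lambda>y. GG J \<beta> r (Zt \<theta> (u(w := y))) j) has_real_derivative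
          (\<Sum>k\<in>J. DG J \<beta> r (Zt \<theta> (u(w := y))) j k * CC \<theta> k w)) (at y)"
    by (rule GG_deriv[OF fJ nJ _ j, where z="\<lambda>y. Zt \<theta> (u(w := y))"]) (rule Zt_upd_deriv[OF w])
  show "isCont (\<lambda>y. \<Sum>k\<in>J. DG J \<beta> r (Zt \<theta> (u(w := y))) j k * CC \<theta> k w) y"
    by (intro continuous_intros DG_cont[OF fJ nJ _ j] Zt_upd_cont) auto
  show "\<bar>GG J \<beta> r (Zt \<theta> u) j\<bar> \<le> Kb * exp ((\<beta> * N) * (\<Sum>v\<in>W. \<bar>u v\<bar>))"
    by (rule f_bound[OF j])
  show "\<bar>\<Sum>k\<in>J. DG J \<beta> r (Zt \<theta> u) j k * CC \<theta> k w\<bar> \<le> Kb * exp ((\<beta> * N) * (\<Sum>v\<in>W. \<bar>u v\<bar>))"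
    by (rule f'_bound[OF j w])
qed measurable

lemma Kb_nonneg: "0 \<le> Kb"
  unfolding Kb_def using bpos m_ge1 N_nonneg by simp

lemma exp_bound_shift:
  fixes x g K L s :: real
  assumes "\<bar>g\<bar> \<le> K * exp (L * s)" "\<bar>x\<bar> \<le> s" "0 \<le> K" "0 \<le> s"
  shows "\<bar>x * g\<bar> \<le> K * exp ((L + 1) * s)"
proof -
  have "\<bar>x\<bar> \<le> exp s" using assms(2) abs_le_exp_abs[of s] assms(4) by simp
  then have "\<bar>x * g\<bar> \<le> exp s * (K * exp (L * s))"
    unfolding abs_mult by (intro mult_mono assms(1)) auto
  also have "\<dots> = K * exp ((L + 1) * s)" by (simp add: exp_add[symmetric] algebra_simps)
  finally show ?thesis .
qed

lemma integrable_uf: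
  assumes j: "j \<in> J" and w: "w \<in> W"
  shows "integrable (gauss W) (\<lambda>u. u w * GG J \<beta> r (Zt \<theta> u) j)"
proof (rule integrable_gauss_bound[OF fW, where K=Kb and L="\<beta> * N + 1"])
  show "(\<lambda>u. u w * GG J \<beta> r (Zt \<theta> u) j) \<in> borel_measurable (gauss W)"
    using w by measurable
  fix u :: "'w \<Rightarrow> real"
  have "\<bar>u w\<bar> \<le> (\<Sum>v\<in>W. \<bar>u v\<bar>)" using fW w by (intro member_le_sum) auto
  then show "\<bar>u w * GG J \<beta> r (Zt \<theta> u) j\<bar> \<le> Kb * exp ((\<beta> * N + 1) * (\<Sum>v\<in>W. \<bar>u v\<bar>))"
    by (intro exp_bound_shift f_bound j Kb_nonneg) (auto simp: sum_nonneg)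
qed

lemma integrable_f':
  assumes j: "j \<in> J" and w: "w \<in> W"
  shows "integrable (gauss W) (\<lambda>u. \<Sum>k\<in>J. DG J \<beta> r (Zt \<theta> u) j k * CC \<theta> k w)"
  by (rule integrable_gauss_bound[OF fW _ f'_bound[OF j w]]) measurable

end

lemma integral_double_sum:
  fixes F :: "'i \<Rightarrow> 'k \<Rightarrow> 'a \<Rightarrow> real"
  assumes "finite I" "finite K" "\<And>i k. i \<in> I \<Longrightarrow> k \<in> K \<Longrightarrow> integrable M (F i k)"
  shows "integral\<^sup>L M (\<lambda>x. \<Sum>i\<in>I. \<Sum>k\<in>K. c i k * F i k x) = (\<Sum>i\<in>I. \<Sum>k\<in>K. c i k * integral\<^sup>L M (F i k))"
proof -
  have "integral\<^sup>L M (\<lambda>x. \<Sum>i\<in>I. \<Sum>k\<in>K. c i k * F i k x) = (\<Sum>i\<in>I. integral\<^sup>L M (\<lambda>x. \<Sum>k\<in>K. c i k * F i k x))"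
    using assms by (intro Bochner_Integration.integral_sum) auto
  also have "\<dots> = (\<Sum>i\<in>I. \<Sum>k\<in>K. integral\<^sup>L M (\<lambda>x. c i k * F i k x))"
    using assms by (intro sum.cong refl Bochner_Integration.integral_sum) auto
  also have "\<dots> = (\<Sum>i\<in>I. \<Sum>k\<in>K. c i k * integral\<^sup>L M (F i k))"
    by (simp add: integral_mult_right_zero)
  finally show ?thesis .
qed

lemma integrable_double_sum:
  fixes F :: "'i \<Rightarrow> 'k \<Rightarrow> 'a \<Rightarrow> real"
  assumes "\<And>i k. i \<in> I \<Longrightarrow> k \<in> K \<Longrightarrow> integrable M (F i k)"
  shows "integrable M (\<lambda>x. \<Sum>i\<in>I. \<Sum>k\<in>K. c i k * F i k x)"
  using assms by (intro Bochner_Integration.integrable_sum integrable_mult_right) auto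

context cmp
begin

lemma hd_expand: "hd \<theta> u = (\<Sum>j\<in>J. \<Sum>w\<in>W. CD \<theta> j w * (u w * GG J \<beta> r (Zt \<theta> u) j))"
  unfolding hd_def Zd_def lin_def by (simp add: sum_distrib_left mult_ac)

lemma CDCC: 
  assumes j: "j \<in> J" and k: "k \<in> J"
  shows "(\<Sum>w\<in>W. CD \<theta> j w * CC \<theta> k w) = sin \<theta> * cos \<theta> * ((\<Sum>w\<in>W. b j w * b k w) - (\<Sum>w\<in>W. a j w * a k w))"
proof -
  have "(\<Sum>w\<in>W. CD \<theta> j w * CC \<theta> k w) =
      - (sin \<theta> * cos \<theta>) * (\<Sum>w\<in>W. a j w * a k w) - (sin \<theta>)^2 * (\<Sum>w\<in>W. a j w * b k w)
      + (cos \<theta>)^2 * (\<Sum>w\<in>W. a k w * b j w) + sin \<theta> * cos \<theta> * (\<Sum>w\<in>W. b j w * b k w)"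
    unfolding CD_def CC_def
    by (simp add: sum_distrib_left sum_subtractf sum.distrib sum_negf power2_eq_square algebra_simps)
  also have "\<dots> = sin \<theta> * cos \<theta> * ((\<Sum>w\<in>W. b j w * b k w) - (\<Sum>w\<in>W. a j w * a k w))"
    using orth[OF j k] orth[OF k j] by (simp add: algebra_simps)
  finally show ?thesis .
qed

definition Q :: "real \<Rightarrow> ('w \<Rightarrow> real) \<Rightarrow> real" where
  "Q \<theta> u = (\<Sum>j\<in>J. \<Sum>w\<in>W. CD \<theta> j w * (\<Sum>k\<in>J. DG J \<beta> r (Zt \<theta> u) j k * CC \<theta> k w))"

lemma Q_nonneg:
  assumes th: "0 \<le> \<theta>" "\<theta> \<le> pi/2"
  shows "0 \<le> Q \<theta> u"
proof -
  have sc: "0 \<le> sin \<theta> * cos \<theta>"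
    using th by (intro mult_nonneg_nonneg sin_ge_zero cos_ge_zero) auto
  have "Q \<theta> u = (\<Sum>j\<in>J. \<Sum>k\<in>J. DG J \<beta> r (Zt \<theta> u) j k * (\<Sum>w\<in>W. CD \<theta> j w * CC \<theta> k w))"
    unfolding Q_def
    by (intro sum.cong refl) (simp add: sum_distrib_left sum.swap[of _ W] mult_ac)
  also have "\<dots> = (\<Sum>j\<in>J. \<Sum>k\<in>J. DG J \<beta> r (Zt \<theta> u) j k *
        (sin \<theta> * cos \<theta> * ((\<Sum>w\<in>W. b j w * b k w) - (\<Sum>w\<in>W. a j w * a k w))))"
    by (intro sum.cong refl) (simp add: CDCC)
  also have "0 \<le> \<dots>"
  proof (intro sum_nonneg)
    fix j k assume j: "j \<in> J" and k: "k \<in> J"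
    show "0 \<le> DG J \<beta> r (Zt \<theta> u) j k *
        (sin \<theta> * cos \<theta> * ((\<Sum>w\<in>W. b j w * b k w) - (\<Sum>w\<in>W. a j w * a k w)))"
    proof (cases "j = k")
      case True then show ?thesis using diag[OF j] by simp
    next
      case False
      have "DG J \<beta> r (Zt \<theta> u) j k \<le> 0"
        using DG_offdiag[OF fJ nJ j k False bpos _ r1] rpos by simp
      moreover have "sin \<theta> * cos \<theta> * ((\<Sum>w\<in>W. b j w * b k w) - (\<Sum>w\<in>W. a j w * a k w)) \<le> 0"
        using off[OF j k False] sc by (intro mult_nonneg_nonpos) auto
      ultimately show ?thesis by (rule mult_nonpos_nonpos)
    qed
  qed
  finally show ?thesis .
qed

lemma integral_hd_eq: "integral\<^sup>L (gauss W) (hd \<theta>) = integral\<^sup>L (gauss W) (Q \<theta>)"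
proof -
  have "integral\<^sup>L (gauss W) (hd \<theta>) =
      integral\<^sup>L (gauss W) (\<lambda>u. \<Sum>j\<in>J. \<Sum>w\<in>W. CD \<theta> j w * (u w * GG J \<beta> r (Zt \<theta> u) j))"
    by (rule arg_cong[where f="integral\<^sup>L (gauss W)"]) (simp add: fun_eq_iff hd_expand)
  also have "\<dots> = (\<Sum>j\<in>J. \<Sum>w\<in>W. CD \<theta> j w * integral\<^sup>L (gauss W) (\<lambda>u. u w * GG J \<beta> r (Zt \<theta> u) j))"
    by (rule integral_double_sum[OF fJ fW, where F="\<lambda>j w u. u w * GG J \<beta> r (Zt \<theta> u) j"])
       (rule integrable_uf)
  also have "\<dots> = (\<Sum>j\<in>J. \<Sum>w\<in>W. CD \<theta> j w *
      integral\<^sup>L (gauss W) (\<lambda>u. \<Sum>k\<in>J. DG J \<beta> r (Zt \<theta> u) j k * CC \<theta> k w))"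
    by (intro sum.cong refl arg_cong2[where f="(*)"] ibp_step)
  also have "\<dots> = integral\<^sup>L (gauss W) (Q \<theta>)"
    unfolding Q_def
    by (rule integral_double_sum[OF fJ fW, where F="\<lambda>j w u. \<Sum>k\<in>J. DG J \<beta> r (Zt \<theta> u) j k * CC \<theta> k w", symmetric])
       (rule integrable_f')
  finally show ?thesis .
qed

lemma integral_hd_nonneg: "0 \<le> \<theta> \<Longrightarrow> \<theta> \<le> pi/2 \<Longrightarrow> 0 \<le> integral\<^sup>L (gauss W) (hd \<theta>)"
  unfolding integral_hd_eq by (intro integral_nonneg_AE AE_I2 Q_nonneg)

definition K2 :: real where "K2 = m * (\<beta> * m * N)"

lemma hd_bound: "\<bar>hd \<theta> u\<bar> \<le> K2 * exp ((\<beta> * N + 1) * sa u)"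
proof -
  have "\<bar>hd \<theta> u\<bar> \<le> (\<Sum>j\<in>J. \<bar>Zd \<theta> u j * GG J \<beta> r (Zt \<theta> u) j\<bar>)"
    unfolding hd_def by (rule order_trans[OF sum_abs]) (simp add: mult_ac)
  also have "\<dots> \<le> (\<Sum>j\<in>J. (\<beta> * m * N) * exp ((\<beta> * N + 1) * sa u))"
  proof (intro sum_mono)
    fix j assume j: "j \<in> J"
    have b1: "\<bar>GG J \<beta> r (Zt \<theta> u) j\<bar> \<le> (\<beta> * m) * exp (\<beta> * N * sa u)"
      using GG_Zt_bound[OF j] by simp
    have "\<bar>Zd \<theta> u j * GG J \<beta> r (Zt \<theta> u) j\<bar> \<le> (N * exp (sa u)) * ((\<beta> * m) * exp (\<beta> * N * sa u))"
      unfolding abs_mult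
    proof (intro mult_mono b1)
      have "N * sa u \<le> N * exp (sa u)"
        using abs_le_exp_abs[of "sa u"] sa_nonneg N_nonneg by (intro mult_left_mono) auto
      then show "\<bar>Zd \<theta> u j\<bar> \<le> N * exp (sa u)" using Zd_bound[OF j, of \<theta> u] by linarith
    qed (use N_nonneg in auto)
    also have "\<dots> = (\<beta> * m * N) * exp ((\<beta> * N + 1) * sa u)"
      by (simp add: exp_add[symmetric] algebra_simps)
    finally show "\<bar>Zd \<theta> u j * GG J \<beta> r (Zt \<theta> u) j\<bar> \<le> (\<beta> * m * N) * exp ((\<beta> * N + 1) * sa u)" .
  qed
  also have "\<dots> = K2 * exp ((\<beta> * N + 1) * sa u)" unfolding K2_def m_def by simp
  finally show ?thesis .
qed

end

context cmp
begin

lemma CC_meas[measurable]: "(\<lambda>x. CC x k w) \<in> borel_measurable borel"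
  unfolding CC_def by measurable
lemma CD_meas[measurable]: "(\<lambda>x. CD x k w) \<in> borel_measurable borel"
  unfolding CD_def by measurable

lemma Zt_pair_meas[measurable]: "(\<lambda>p. Zt (fst p) (snd p) k) \<in> borel_measurable (lborel \<Otimes>\<^sub>M gauss W)"
  unfolding Zt_def by (rule lin_measurable_pair) measurable
lemma Zd_pair_meas[measurable]: "(\<lambda>p. Zd (fst p) (snd p) k) \<in> borel_measurable (lborel \<Otimes>\<^sub>M gauss W)"
  unfolding Zd_def by (rule lin_measurable_pair) measurable

lemma hd_pair_meas[measurable]: "(\<lambda>p. hd (fst p) (snd p)) \<in> borel_measurable (lborel \<Otimes>\<^sub>M gauss W)"
  unfolding hd_def by measurable

lemma Zt_theta_deriv: "((\<lambda>\<theta>. Zt \<theta> u k) has_real_derivative Zd \<theta>0 u k) (at \<theta>0 within X)"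
  unfolding Zt_def Zd_def lin_def CC_def CD_def
  by (rule DERIV_sum) (auto intro!: derivative_eq_intros)

lemma Zt_theta_cont: "isCont (\<lambda>\<theta>. Zt \<theta> u k) \<theta>0"
  unfolding Zt_def lin_def CC_def by (intro continuous_intros)
lemma Zd_theta_cont: "isCont (\<lambda>\<theta>. Zd \<theta> u k) \<theta>0"
  unfolding Zd_def lin_def CD_def by (intro continuous_intros)

lemma hd_theta_cont: "isCont (\<lambda>\<theta>. hd \<theta> u) \<theta>0"
  unfolding hd_def by (intro continuous_intros GG_cont[OF fJ nJ] Zt_theta_cont Zd_theta_cont) auto

lemma FTC_u:
  "HH J \<beta> r (Zt (pi/2) u) - HH J \<beta> r (Zt 0 u) = (LBINT \<theta>. indicator {0..pi/2} \<theta> * hd \<theta> u)"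
proof -
  have "(LBINT \<theta>. indicator {0..pi/2} \<theta> *\<^sub>R hd \<theta> u) = HH J \<beta> r (Zt (pi/2) u) - HH J \<beta> r (Zt 0 u)"
  proof (rule integral_FTC_atLeastAtMost)
    fix x :: real
    have "((\<lambda>\<theta>. HH J \<beta> r (Zt \<theta> u)) has_real_derivative hd x u) (at x within {0..pi/2})"
      unfolding hd_def by (rule HH_deriv[OF fJ nJ]) (rule Zt_theta_deriv)
    then show "((\<lambda>\<theta>. HH J \<beta> r (Zt \<theta> u)) has_vector_derivative hd x u) (at x within {0..pi/2})"
      by (simp add: has_real_derivative_iff_has_vector_derivative)
  next
    show "continuous_on {0..pi/2} (\<lambda>\<theta>. hd \<theta> u)"
      by (intro continuous_at_imp_continuous_on ballI hd_theta_cont)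
  qed simp
  then show ?thesis by simp
qed

lemma Zt_0: "Zt 0 u = (\<lambda>j. lin W (a j) u)"
  unfolding Zt_def CC_def by simp
lemma Zt_pi2: "Zt (pi/2) u = (\<lambda>j. lin W (b j) u)"
  unfolding Zt_def CC_def by simp

lemma integrable_HH_Zt: "integrable (gauss W) (\<lambda>u. HH J \<beta> r (Zt \<theta> u))"
proof (rule integrable_gauss_bound[OF fW, where K=m and L="\<beta> * N"])
  show "(\<lambda>u. HH J \<beta> r (Zt \<theta> u)) \<in> borel_measurable (gauss W)" by measurable
  fix u :: "'w \<Rightarrow> real"
  show "\<bar>HH J \<beta> r (Zt \<theta> u)\<bar> \<le> m * exp (\<beta> * N * (\<Sum>v\<in>W. \<bar>u v\<bar>))"
  proof -
    have "0 < HH J \<beta> r (Zt \<theta> u)" by (rule HH_pos)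
    then show ?thesis using HH_Zt_bound[of \<theta> u] unfolding sa_def by simp
  qed
qed

lemma pair_sf: "pair_sigma_finite lborel (gauss W)"
  unfolding pair_sigma_finite_def
  using lborel.sigma_finite_measure_axioms prob_space_imp_sigma_finite[OF prob_space_gauss] by auto

lemma integrable_pair:
  "integrable (lborel \<Otimes>\<^sub>M gauss W) (\<lambda>(\<theta>, u). indicator {0..pi/2} \<theta> * hd \<theta> u)"
proof -
  interpret P: pair_sigma_finite lborel "gauss W" by (rule pair_sf)
  let ?L = "\<beta> * N + 1"
  let ?G = "\<lambda>p :: real \<times> ('w \<Rightarrow> real). indicator {0..pi/2} (fst p) * (K2 * exp (?L * sa (snd p)))"
  have sa_meas[measurable]: "(\<lambda>p. sa (snd p)) \<in> borel_measurable (lborel \<Otimes>\<^sub>M gauss W)"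
    unfolding sa_def by (intro borel_measurable_sum) measurable
  have K20: "0 \<le> K2" unfolding K2_def using m_ge1 bpos N_nonneg by simp
  have iG: "integrable (lborel \<Otimes>\<^sub>M gauss W) ?G"
  proof (rule P.Fubini_integrable)
    show "?G \<in> borel_measurable (lborel \<Otimes>\<^sub>M gauss W)" by measurable
    have ie: "integrable (gauss W) (\<lambda>u. exp (?L * sa u))"
      unfolding sa_def by (rule integrable_gauss_exp[OF fW])
    have "(\<lambda>x. LINT y|gauss W. norm (?G (x, y))) = (\<lambda>x. indicator {0..pi/2} x * (K2 * integral\<^sup>L (gauss W) (\<lambda>u. exp (?L * sa u))))"
    proof
      fix x
      have "(LINT y|gauss W. norm (?G (x, y))) = (LINT y|gauss W. indicator {0..pi/2} x * (K2 * exp (?L * sa y)))"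
        using K20 by (intro Bochner_Integration.integral_cong) (auto simp: abs_mult)
      also have "\<dots> = indicator {0..pi/2} x * (K2 * integral\<^sup>L (gauss W) (\<lambda>u. exp (?L * sa u)))"
        by (simp add: integral_mult_right_zero)
      finally show "(LINT y|gauss W. norm (?G (x, y))) = indicator {0..pi/2} x * (K2 * integral\<^sup>L (gauss W) (\<lambda>u. exp (?L * sa u)))" .
    qed
    moreover have "integrable lborel (\<lambda>x. indicator {0..pi/2} x * (K2 * integral\<^sup>L (gauss W) (\<lambda>u. exp (?L * sa u))))"
      by (intro integrable_mult_left integrable_real_indicator) auto
    ultimately show "integrable lborel (\<lambda>x. LINT y|gauss W. norm (?G (x, y)))" by simp
    show "AE x in lborel. integrable (gauss W) (\<lambda>y. ?G (x, y))"
      using ie by (intro AE_I2) (auto intro!: integrable_mult_right)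
  qed
  show ?thesis
  proof (rule Bochner_Integration.integrable_bound[OF iG])
    show "(\<lambda>(\<theta>, u). indicator {0..pi/2} \<theta> * hd \<theta> u) \<in> borel_measurable (lborel \<Otimes>\<^sub>M gauss W)"
      unfolding case_prod_beta by measurable
    show "AE p in lborel \<Otimes>\<^sub>M gauss W. norm ((\<lambda>(\<theta>, u). indicator {0..pi/2} \<theta> * hd \<theta> u) p) \<le> norm (?G p)"
    proof (intro AE_I2)
      fix p :: "real \<times> ('w \<Rightarrow> real)"
      obtain \<theta> u where p: "p = (\<theta>, u)" by force
      have "\<bar>indicator {0..pi/2} \<theta> * hd \<theta> u\<bar> \<le> indicator {0..pi/2} \<theta> * (K2 * exp (?L * sa u))"
        using hd_bound[of \<theta> u] by (auto simp: indicator_def abs_mult)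
      then show "norm ((\<lambda>(\<theta>, u). indicator {0..pi/2} \<theta> * hd \<theta> u) p) \<le> norm (?G p)"
        using K20 p by (simp add: abs_mult)
    qed
  qed
qed

theorem compare:
  "integral\<^sup>L (gauss W) (\<lambda>u. HH J \<beta> r (\<lambda>j. lin W (a j) u))
     \<le> integral\<^sup>L (gauss W) (\<lambda>u. HH J \<beta> r (\<lambda>j. lin W (b j) u))"
proof -
  interpret P: pair_sigma_finite lborel "gauss W" by (rule pair_sf)
  have "integral\<^sup>L (gauss W) (\<lambda>u. HH J \<beta> r (\<lambda>j. lin W (b j) u)) - integral\<^sup>L (gauss W) (\<lambda>u. HH J \<beta> r (\<lambda>j. lin W (a j) u))
      = integral\<^sup>L (gauss W) (\<lambda>u. HH J \<beta> r (Zt (pi/2) u) - HH J \<beta> r (Zt 0 u))"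
  proof -
    have i0: "integrable (gauss W) (\<lambda>u. HH J \<beta> r (\<lambda>j. lin W (a j) u))"
      using integrable_HH_Zt[of 0] unfolding Zt_0 .
    have i1: "integrable (gauss W) (\<lambda>u. HH J \<beta> r (\<lambda>j. lin W (b j) u))"
      using integrable_HH_Zt[of "pi/2"] unfolding Zt_pi2 .
    show ?thesis unfolding Zt_0 Zt_pi2
      by (rule Bochner_Integration.integral_diff[symmetric, OF i1 i0])
  qed
  also have "\<dots> = integral\<^sup>L (gauss W) (\<lambda>u. integral\<^sup>L lborel (\<lambda>\<theta>. indicator {0..pi/2} \<theta> * hd \<theta> u))"
    by (simp add: FTC_u)
  also have "\<dots> = integral\<^sup>L lborel (\<lambda>\<theta>. integral\<^sup>L (gauss W) (\<lambda>u. indicator {0..pi/2} \<theta> * hd \<theta> u))"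
    by (rule P.Fubini_integral[OF integrable_pair])
  finally have eq: "integral\<^sup>L (gauss W) (\<lambda>u. HH J \<beta> r (\<lambda>j. lin W (b j) u)) - integral\<^sup>L (gauss W) (\<lambda>u. HH J \<beta> r (\<lambda>j. lin W (a j) u))
     = integral\<^sup>L lborel (\<lambda>\<theta>. integral\<^sup>L (gauss W) (\<lambda>u. indicator {0..pi/2} \<theta> * hd \<theta> u))" .
  have "0 \<le> integral\<^sup>L lborel (\<lambda>\<theta>. integral\<^sup>L (gauss W) (\<lambda>u. indicator {0..pi/2} \<theta> * hd \<theta> u))"
  proof (rule integral_nonneg_AE, rule AE_I2)
    fix \<theta> :: real
    assume "\<theta> \<in> space lborel"
    show "0 \<le> integral\<^sup>L (gauss W) (\<lambda>u. indicator {0..pi/2} \<theta> * hd \<theta> u)"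
      using integral_hd_nonneg[of \<theta>]
      by (auto simp: integral_mult_right_zero indicator_def)
  qed
  then show ?thesis using eq by simp
qed

end

definition Ix :: "nat \<Rightarrow> (nat \<Rightarrow> 'n) set" where "Ix p = PiE {..<p} (\<lambda>_. UNIV :: 'n set)"

definition Xf :: "nat \<Rightarrow> ((nat \<Rightarrow> 'n) \<Rightarrow> real) \<Rightarrow> real ^ 'n \<Rightarrow> real" where
  "Xf p A x = (\<Sum>\<iota>\<in>Ix p. A \<iota> * (\<Prod>k<p. x $ \<iota> k))"

definition Yf :: "('n \<Rightarrow> real) \<Rightarrow> real ^ 'n \<Rightarrow> real" where
  "Yf g x = (\<Sum>i\<in>UNIV. g i * x $ i)"

definition WW :: "nat \<Rightarrow> ((nat \<Rightarrow> 'n::finite) option + 'n) set" where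
  "WW p = Inl ` insert None (Some ` Ix p) \<union> Inr ` UNIV"

definition aa :: "nat \<Rightarrow> ('j \<Rightarrow> real ^ 'n) \<Rightarrow> 'j \<Rightarrow> ((nat \<Rightarrow> 'n) option + 'n) \<Rightarrow> real" where
  "aa p d j w = (case w of Inl None \<Rightarrow> sqrt (real p - 1) | Inl (Some \<iota>) \<Rightarrow> (\<Prod>k<p. d j $ \<iota> k) | Inr i \<Rightarrow> 0)"

definition bb :: "nat \<Rightarrow> ('j \<Rightarrow> real ^ 'n) \<Rightarrow> 'j \<Rightarrow> ((nat \<Rightarrow> 'n) option + 'n) \<Rightarrow> real" where
  "bb p d j w = (case w of Inl _ \<Rightarrow> 0 | Inr i \<Rightarrow> sqrt (real p) * d j $ i)"

lemma finite_Ix: "finite (Ix p :: (nat \<Rightarrow> 'n::finite) set)"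
  unfolding Ix_def by (rule finite_PiE) auto

lemma finite_WW: "finite (WW p :: ((nat \<Rightarrow> 'n::finite) option + 'n) set)"
  unfolding WW_def using finite_Ix by auto

lemma sum_WW:
  "(\<Sum>w\<in>WW p. f w) = f (Inl None) + (\<Sum>\<iota>\<in>Ix p. f (Inl (Some \<iota>))) + (\<Sum>i\<in>(UNIV :: 'n::finite set). f (Inr i))"
proof -
  have "(\<Sum>w\<in>WW p. f w) = (\<Sum>w\<in>Inl ` insert None (Some ` Ix p). f w) + (\<Sum>w\<in>Inr ` (UNIV :: 'n set). f w)"
    unfolding WW_def using finite_Ix by (intro sum.union_disjoint) auto
  also have "(\<Sum>w\<in>Inl ` insert None (Some ` Ix p). f w) = (\<Sum>v\<in>insert None (Some ` Ix p). f (Inl v))"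
    by (subst sum.reindex) (auto simp: inj_on_def)
  also have "\<dots> = f (Inl None) + (\<Sum>v\<in>Some ` Ix p. f (Inl v))"
    using finite_Ix by (subst sum.insert) auto
  also have "(\<Sum>v\<in>Some ` Ix p. f (Inl v)) = (\<Sum>\<iota>\<in>Ix p. f (Inl (Some \<iota>)))"
    by (subst sum.reindex) (auto simp: inj_on_def)
  also have "(\<Sum>w\<in>Inr ` (UNIV :: 'n set). f w) = (\<Sum>i\<in>UNIV. f (Inr i))"
    by (subst sum.reindex) (auto simp: inj_on_def)
  finally show ?thesis .
qed

lemma lin_aa: "lin (WW p) (aa p d j) u = sqrt (real p - 1) * u (Inl None) + Xf p (\<lambda>\<iota>. u (Inl (Some \<iota>))) (d j)"
  unfolding lin_def sum_WW Xf_def aa_def by (simp add: mult_ac)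

lemma lin_bb: "lin (WW p) (bb p d j) u = sqrt (real p) * Yf (\<lambda>i. u (Inr i)) (d j)"
  unfolding lin_def sum_WW Yf_def bb_def by (simp add: sum_distrib_left mult_ac)

lemma cov_ab: "(\<Sum>w\<in>WW p. aa p d j w * bb p d k w) = 0"
  unfolding sum_WW aa_def bb_def by simp

lemma prod_sum_Ix:
  fixes f :: "'n::finite \<Rightarrow> real"
  shows "(\<Sum>\<iota>\<in>Ix p. \<Prod>l<p. f (\<iota> l)) = (\<Sum>i\<in>(UNIV :: 'n::finite set). f i) ^ p"
proof -
  have "(\<Sum>i\<in>(UNIV :: 'n set). f i) ^ p = (\<Prod>l<p. \<Sum>i\<in>(UNIV :: 'n set). f i)" by simp
  also have "\<dots> = (\<Sum>\<iota>\<in>PiE {..<p} (\<lambda>_. UNIV :: 'n set). \<Prod>l<p. f (\<iota> l))"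
    using prod_sum_PiE[of "{..<p}" "\<lambda>_. UNIV :: 'n set" "\<lambda>_ i. f i"] by simp
  finally show ?thesis unfolding Ix_def by simp
qed

lemma cov_aa:
  assumes "p > 0"
  shows "(\<Sum>w\<in>WW p. aa p d j w * aa p d k w) = (real p - 1) + (\<Sum>i\<in>UNIV. d j $ i * d k $ i) ^ p"
proof -
  have "(\<Sum>\<iota>\<in>Ix p. (\<Prod>l<p. d j $ \<iota> l) * (\<Prod>l<p. d k $ \<iota> l)) = (\<Sum>\<iota>\<in>Ix p. \<Prod>l<p. d j $ \<iota> l * d k $ \<iota> l)"
    by (simp add: prod.distrib)
  also have "\<dots> = (\<Sum>i\<in>UNIV. d j $ i * d k $ i) ^ p"
    by (rule prod_sum_Ix)
  finally have e: "(\<Sum>\<iota>\<in>Ix p. (\<Prod>l<p. d j $ \<iota> l) * (\<Prod>l<p. d k $ \<iota> l)) = (\<Sum>i\<in>UNIV. d j $ i * d k $ i) ^ p" .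
  have s: "sqrt (real p - 1) * sqrt (real p - 1) = real p - 1"
    using assms by simp
  show ?thesis unfolding sum_WW aa_def using e s by simp
qed

lemma cov_bb: "(\<Sum>w\<in>WW p. bb p d j w * bb p d k w) = real p * (\<Sum>i\<in>UNIV. d j $ i * d k $ i)"
proof -
  have e: "sqrt (real p) * (sqrt (real p) * y) = real p * y" for y by (simp add: mult.assoc[symmetric])
  show ?thesis unfolding sum_WW bb_def by (simp add: sum_distrib_left mult_ac e)
qed

lemma bernoulli_even:
  assumes "even p" "p > 0"
  shows "real p * t \<le> (real p - 1) + t ^ p"
proof (cases "t \<ge> 0")
  case True
  have "1 + real p * (t - 1) \<le> (1 + (t - 1)) ^ p"
    by (rule Bernoulli_inequality) (use True in simp)
  then show ?thesis by (simp add: algebra_simps)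
next
  case False
  have "0 \<le> t ^ p" using assms(1) by (simp add: zero_le_even_power)
  moreover have "real p * t \<le> 0" using False by (simp add: mult_nonneg_nonpos)
  moreover have "1 \<le> real p" using assms(2) by simp
  ultimately show ?thesis by linarith
qed

lemma sphere_inner: "x \<in> sphere (0::real^'n) 1 \<Longrightarrow> (\<Sum>i\<in>UNIV. x $ i * x $ i) = 1"
proof -
  assume "x \<in> sphere (0::real^'n) 1"
  then have "x \<bullet> x = 1" by (simp add: norm_eq_1[symmetric])
  then show ?thesis by (simp add: inner_vec_def)
qed

lemma cmp_inst:
  fixes d :: "nat \<Rightarrow> real ^ 'n::finite"
  assumes p: "p > 0" "even p" and J: "finite J" "J \<noteq> {}" and dS: "\<And>j. j \<in> J \<Longrightarrow> d j \<in> sphere 0 1"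
    and b: "0 < \<beta>" "0 < r" "r \<le> 1"
  shows "cmp (WW p :: ((nat \<Rightarrow> 'n) option + 'n) set) J (aa p d) (bb p d) \<beta> r"
proof
  show "finite (WW p :: ((nat \<Rightarrow> 'n) option + 'n) set)" by (rule finite_WW)
  show "finite J" "J \<noteq> {}" by (rule J)+
  show "0 < \<beta>" "0 < r" "r \<le> 1" by (rule b)+
  fix j k
  show "(\<Sum>w\<in>WW p. aa p d j w * bb p d k w) = 0" by (rule cov_ab)
  assume j: "j \<in> J"
  show "(\<Sum>w\<in>WW p. aa p d j w * aa p d j w) = (\<Sum>w\<in>WW p. bb p d j w * bb p d j w)"
    unfolding cov_aa[OF p(1)] cov_bb sphere_inner[OF dS[OF j]] by simp
  assume k: "k \<in> J" "j \<noteq> k"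
  show "(\<Sum>w\<in>WW p. bb p d j w * bb p d k w) \<le> (\<Sum>w\<in>WW p. aa p d j w * aa p d k w)"
    unfolding cov_aa[OF p(1)] cov_bb by (rule bernoulli_even[OF p(2,1)])
qed

lemma le_powr_limit:
  fixes A B m :: real
  assumes m: "1 \<le> m" and h: "\<And>r. 0 < r \<Longrightarrow> r \<le> 1 \<Longrightarrow> A \<le> m powr r * B"
  shows "A \<le> B"
proof -
  have "((\<lambda>r. m powr r * B) \<longlongrightarrow> m powr 0 * B) (at_right 0)"
    using m by (intro tendsto_intros) auto
  then have lim: "((\<lambda>r. m powr r * B) \<longlongrightarrow> B) (at_right 0)" using m by simp
  have ev: "eventually (\<lambda>r. A \<le> m powr r * B) (at_right (0::real))"
    unfolding eventually_at_right_field by (intro exI[of _ 1]) (auto intro: h)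
  show ?thesis by (rule tendsto_lowerbound[OF lim ev]) simp
qed

lemma finite_core:
  fixes d :: "nat \<Rightarrow> real ^ 'n::finite" and c :: real
  assumes p: "p > 0" "even p" and J: "finite J" "J \<noteq> {}"
    and dS: "\<And>j. j \<in> J \<Longrightarrow> d j \<in> sphere 0 1" and c: "0 < c"
  shows "integral\<^sup>L (gauss (WW p)) (\<lambda>u. exp (c * Max ((\<lambda>j. lin (WW p) (aa p d j) u) ` J)))
       \<le> integral\<^sup>L (gauss (WW p)) (\<lambda>u. exp (c * Max ((\<lambda>j. lin (WW p) (bb p d j) u) ` J)))"
    (is "?LW \<le> ?RW")
proof -
  let ?W = "WW p :: ((nat \<Rightarrow> 'n) option + 'n) set"
  let ?U = "\<lambda>u j. lin ?W (aa p d j) u"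
  let ?V = "\<lambda>u j. lin ?W (bb p d j) u"
  have mes[measurable]: "(\<lambda>u. exp (c * Max ((\<lambda>j. lin ?W (f j) u) ` J))) \<in> borel_measurable (gauss ?W)" for f
    using J by measurable
  interpret C1: cmp ?W J "aa p d" "bb p d" c 1
    by (rule cmp_inst[OF p J dS]) (use c in auto)
  have iHV1: "integrable (gauss ?W) (\<lambda>u. HH J c 1 (?V u))"
    using C1.integrable_HH_Zt[of "pi/2"] unfolding C1.Zt_pi2 .
  have iRW: "integrable (gauss ?W) (\<lambda>u. exp (c * Max ((\<lambda>j. ?V u j) ` J)))"
  proof (rule Bochner_Integration.integrable_bound[OF iHV1])
    show "AE u in gauss ?W. norm (exp (c * Max ((\<lambda>j. ?V u j) ` J))) \<le> norm (HH J c 1 (?V u))"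
    proof (intro AE_I2)
      fix u
      have "Max ((\<lambda>j. ?V u j) ` J) \<in> (\<lambda>j. ?V u j) ` J" using J by (intro Max_in) auto
      then obtain j0 where j0: "j0 \<in> J" "Max ((\<lambda>j. ?V u j) ` J) = ?V u j0" by blast
      have "exp (1 * c * ?V u j0) \<le> HH J c 1 (?V u)" by (rule HH_ge[OF J(1) j0(1)]) simp
      then show "norm (exp (c * Max ((\<lambda>j. ?V u j) ` J))) \<le> norm (HH J c 1 (?V u))"
        using j0 HH_pos[of J c 1 "?V u"] by simp
    qed
  qed measurable
  have step: "?LW \<le> real (card J) powr r * ?RW" if r: "0 < r" "r \<le> 1" for r
  proof -
    interpret C: cmp ?W J "aa p d" "bb p d" "c / r" r
      by (rule cmp_inst[OF p J dS]) (use c r in auto)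
    have rc: "r * (c / r) = c" using r by simp
    have iHU: "integrable (gauss ?W) (\<lambda>u. HH J (c/r) r (?U u))"
      using C.integrable_HH_Zt[of 0] unfolding C.Zt_0 .
    have iHV: "integrable (gauss ?W) (\<lambda>u. HH J (c/r) r (?V u))"
      using C.integrable_HH_Zt[of "pi/2"] unfolding C.Zt_pi2 .
    have lowU: "exp (c * Max ((\<lambda>j. ?U u j) ` J)) \<le> HH J (c/r) r (?U u)" for u
    proof -
      have "Max ((\<lambda>j. ?U u j) ` J) \<in> (\<lambda>j. ?U u j) ` J" using J by (intro Max_in) auto
      then obtain j0 where j0: "j0 \<in> J" "Max ((\<lambda>j. ?U u j) ` J) = ?U u j0" by blast
      have "exp (r * (c/r) * ?U u j0) \<le> HH J (c/r) r (?U u)" by (rule HH_ge[OF J(1) j0(1)]) (use r in simp)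
      then show ?thesis using j0 rc by simp
    qed
    have iLW: "integrable (gauss ?W) (\<lambda>u. exp (c * Max ((\<lambda>j. ?U u j) ` J)))"
    proof (rule Bochner_Integration.integrable_bound[OF iHU])
      show "AE u in gauss ?W. norm (exp (c * Max ((\<lambda>j. ?U u j) ` J))) \<le> norm (HH J (c/r) r (?U u))"
      proof (intro AE_I2)
        fix u
        have "0 < HH J (c/r) r (?U u)" by (rule HH_pos)
        then show "norm (exp (c * Max ((\<lambda>j. ?U u j) ` J))) \<le> norm (HH J (c/r) r (?U u))"
          using lowU[of u] by simp
      qed
    qed measurable
    have "?LW \<le> integral\<^sup>L (gauss ?W) (\<lambda>u. HH J (c/r) r (?U u))"
      by (intro integral_mono iLW iHU lowU)
    also have "\<dots> \<le> integral\<^sup>L (gauss ?W) (\<lambda>u. HH J (c/r) r (?V u))"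
      by (rule C.compare)
    also have "\<dots> \<le> integral\<^sup>L (gauss ?W) (\<lambda>u. real (card J) powr r * exp (c * Max ((\<lambda>j. ?V u j) ` J)))"
    proof (intro integral_mono iHV integrable_mult_right iRW)
      fix u
      have "HH J (c/r) r (?V u) \<le> real (card J) powr r * exp (r * (c/r) * Max ((\<lambda>j. ?V u j) ` J))"
        by (rule HH_le_Max[OF J]) (use r c in auto)
      then show "HH J (c/r) r (?V u) \<le> real (card J) powr r * exp (c * Max ((\<lambda>j. ?V u j) ` J))"
        using rc by simp
    qed
    also have "\<dots> = real (card J) powr r * ?RW"
      by (simp add: integral_mult_right_zero)
    finally show ?thesis .
  qed
  show ?thesis
    by (rule le_powr_limit[OF _ step]) (use J in \<open>auto simp: Suc_leI card_gt_0_iff\<close>)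
qed

lemma reindex_meas:
  assumes "f \<in> I \<rightarrow> K"
  shows "(\<lambda>u. \<lambda>n\<in>I. u (f n)) \<in> gauss K \<rightarrow>\<^sub>M gauss I"
  by (rule measurable_restrict) (use assms in \<open>auto intro!: measurable_component_singleton\<close>)

lemma distr_gauss_reindex:
  assumes "inj_on f I" "f \<in> I \<rightarrow> K"
  shows "distr (gauss K) (gauss I) (\<lambda>u. \<lambda>n\<in>I. u (f n)) = gauss I"
  using distr_PiM_reindex[of K "\<lambda>_. std_normal" f I] assms prob_space_std_normal by simp

lemma integral_gauss_reindex:
  fixes F :: "('i \<Rightarrow> real) \<Rightarrow> real"
  assumes "inj_on f I" "f \<in> I \<rightarrow> K" and [measurable]: "F \<in> borel_measurable (gauss I)"
  shows "integral\<^sup>L (gauss I) F = integral\<^sup>L (gauss K) (\<lambda>u. F (\<lambda>n\<in>I. u (f n)))"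
proof -
  have "integral\<^sup>L (gauss I) F = integral\<^sup>L (distr (gauss K) (gauss I) (\<lambda>u. \<lambda>n\<in>I. u (f n))) F"
    unfolding distr_gauss_reindex[OF assms(1,2)] ..
  also have "\<dots> = integral\<^sup>L (gauss K) (\<lambda>u. F (\<lambda>n\<in>I. u (f n)))"
    by (rule integral_distr[OF reindex_meas[OF assms(2)] assms(3)])
  finally show ?thesis .
qed

lemma integrable_gauss_reindex:
  fixes F :: "('i \<Rightarrow> real) \<Rightarrow> real"
  assumes "inj_on f I" "f \<in> I \<rightarrow> K" and [measurable]: "F \<in> borel_measurable (gauss I)"
  shows "integrable (gauss I) F \<longleftrightarrow> integrable (gauss K) (\<lambda>u. F (\<lambda>n\<in>I. u (f n)))"
proof -
  have "integrable (gauss I) F \<longleftrightarrow> integrable (distr (gauss K) (gauss I) (\<lambda>u. \<lambda>n\<in>I. u (f n))) F"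
    unfolding distr_gauss_reindex[OF assms(1,2)] ..
  also have "\<dots> \<longleftrightarrow> integrable (gauss K) (\<lambda>u. F (\<lambda>n\<in>I. u (f n)))"
    by (rule integrable_distr_eq[OF reindex_meas[OF assms(2)] assms(3)])
  finally show ?thesis .
qed

lemma Yf_meas[measurable]: "(\<lambda>g. Yf g x) \<in> borel_measurable (gauss (UNIV :: 'n::finite set))"
  unfolding Yf_def by measurable

lemma Xf_meas[measurable]: "(\<lambda>A. Xf p A x) \<in> borel_measurable (gauss (Ix p :: (nat \<Rightarrow> 'n::finite) set))"
  unfolding Xf_def by (intro borel_measurable_sum) measurable

lemma RW_eq:
  fixes d :: "nat \<Rightarrow> real ^ 'n::finite"
  assumes J: "finite J"
  shows "integral\<^sup>L (gauss (WW p)) (\<lambda>u. exp (c * Max ((\<lambda>j. lin (WW p) (bb p d j) u) ` J)))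
       = integral\<^sup>L (gauss (UNIV :: 'n set)) (\<lambda>g. exp (c * Max ((\<lambda>j. sqrt (real p) * Yf g (d j)) ` J)))"
proof -
  have "integral\<^sup>L (gauss (UNIV :: 'n set)) (\<lambda>g. exp (c * Max ((\<lambda>j. sqrt (real p) * Yf g (d j)) ` J)))
      = integral\<^sup>L (gauss (WW p)) (\<lambda>u. exp (c * Max ((\<lambda>j. sqrt (real p) * Yf (\<lambda>n\<in>UNIV. u (Inr n)) (d j)) ` J)))"
    by (rule integral_gauss_reindex) (use J in \<open>auto simp: WW_def\<close>)
  also have "\<dots> = integral\<^sup>L (gauss (WW p)) (\<lambda>u. exp (c * Max ((\<lambda>j. lin (WW p) (bb p d j) u) ` J)))"
    by (simp add: lin_bb restrict_UNIV)
  finally show ?thesis by simp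
qed

lemma integrable_LW:
  fixes d :: "nat \<Rightarrow> real ^ 'n::finite" and c :: real
  assumes p: "p > 0" "even p" and J: "finite J" "J \<noteq> {}"
    and dS: "\<And>j. j \<in> J \<Longrightarrow> d j \<in> sphere 0 1" and c: "0 < c"
  shows "integrable (gauss (WW p)) (\<lambda>u. exp (c * Max ((\<lambda>j. lin (WW p) (aa p d j) u) ` J)))"
proof -
  let ?W = "WW p :: ((nat \<Rightarrow> 'n) option + 'n) set"
  let ?U = "\<lambda>u j. lin ?W (aa p d j) u"
  interpret C1: cmp ?W J "aa p d" "bb p d" c 1
    by (rule cmp_inst[OF p J dS]) (use c in auto)
  have iH: "integrable (gauss ?W) (\<lambda>u. HH J c 1 (?U u))"
    using C1.integrable_HH_Zt[of 0] unfolding C1.Zt_0 .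
  show ?thesis
  proof (rule Bochner_Integration.integrable_bound[OF iH])
    show "AE u in gauss ?W. norm (exp (c * Max ((\<lambda>j. ?U u j) ` J))) \<le> norm (HH J c 1 (?U u))"
    proof (intro AE_I2)
      fix u
      have "Max ((\<lambda>j. ?U u j) ` J) \<in> (\<lambda>j. ?U u j) ` J" using J by (intro Max_in) auto
      then obtain j0 where j0: "j0 \<in> J" "Max ((\<lambda>j. ?U u j) ` J) = ?U u j0" by blast
      have "exp (1 * c * ?U u j0) \<le> HH J c 1 (?U u)" by (rule HH_ge[OF J(1) j0(1)]) simp
      then show "norm (exp (c * Max ((\<lambda>j. ?U u j) ` J))) \<le> norm (HH J c 1 (?U u))"
        using j0 HH_pos[of J c 1 "?U u"] by simp
    qed
  qed (use J in measurable)
qed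

lemma LW_eq:
  fixes d :: "nat \<Rightarrow> real ^ 'n::finite" and c :: real
  assumes p: "p > 0" "even p" and J: "finite J" "J \<noteq> {}"
    and dS: "\<And>j. j \<in> J \<Longrightarrow> d j \<in> sphere 0 1" and c: "0 < c"
  shows "integral\<^sup>L (gauss (WW p)) (\<lambda>u. exp (c * Max ((\<lambda>j. lin (WW p) (aa p d j) u) ` J)))
       = exp (c^2 * (real p - 1) / 2) * integral\<^sup>L (gauss (Ix p :: (nat \<Rightarrow> 'n) set)) (\<lambda>A. exp (c * Max ((\<lambda>j. Xf p A (d j)) ` J)))"
proof -
  let ?W = "WW p :: ((nat \<Rightarrow> 'n) option + 'n) set"
  let ?I2 = "Some ` (Ix p :: (nat \<Rightarrow> 'n) set)"
  let ?I1 = "insert None ?I2"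
  let ?s = "sqrt (real p - 1)"
  define G where "G v = exp (c * Max ((\<lambda>j. ?s * v None + Xf p (\<lambda>\<iota>. v (Some \<iota>)) (d j)) ` J))"
    for v :: "(nat \<Rightarrow> 'n) option \<Rightarrow> real"
  define H where "H A = exp (c * Max ((\<lambda>j. Xf p A (d j)) ` J))" for A :: "(nat \<Rightarrow> 'n) \<Rightarrow> real"
  have Gm[measurable]: "G \<in> borel_measurable (gauss ?I1)"
  proof -
    have "(\<lambda>v. Xf p (\<lambda>\<iota>. v (Some \<iota>)) x) \<in> borel_measurable (gauss ?I1)" for x
      unfolding Xf_def by (intro borel_measurable_sum) measurable
    then show ?thesis unfolding G_def using J by measurable
  qed
  have Hm[measurable]: "H \<in> borel_measurable (gauss (Ix p))"
    unfolding H_def using J by measurable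
  have inj1: "inj_on Inl ?I1" by (auto simp: inj_on_def)
  have f1: "Inl \<in> ?I1 \<rightarrow> ?W" by (auto simp: WW_def)
  have Grestr: "G (\<lambda>n\<in>?I1. u (Inl n)) = exp (c * Max ((\<lambda>j. lin ?W (aa p d j) u) ` J))" for u
  proof -
    have "Xf p (\<lambda>\<iota>. (\<lambda>n\<in>?I1. u (Inl n)) (Some \<iota>)) x = Xf p (\<lambda>\<iota>. u (Inl (Some \<iota>))) x" for x
      unfolding Xf_def by (intro sum.cong refl) auto
    then show ?thesis unfolding G_def lin_aa by simp
  qed
  have LW1: "integral\<^sup>L (gauss ?W) (\<lambda>u. exp (c * Max ((\<lambda>j. lin ?W (aa p d j) u) ` J))) = integral\<^sup>L (gauss ?I1) G"
    using integral_gauss_reindex[OF inj1 f1 Gm] Grestr by simp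
  have iG: "integrable (gauss ?I1) G"
    using integrable_gauss_reindex[OF inj1 f1 Gm] Grestr integrable_LW[OF p J dS c] by simp
  interpret PP: product_prob_space "\<lambda>_::(nat \<Rightarrow> 'n) option. std_normal" by (rule product_prob_space_std_normal)
  have fI2: "finite ?I2" using finite_Ix by auto
  have "integral\<^sup>L (gauss ?I1) G = (\<integral>x. (\<integral>y. G (x(None := y)) \<partial>std_normal) \<partial>gauss ?I2)"
    by (rule PP.product_integral_insert[OF fI2 _ iG]) auto
  also have "\<dots> = (\<integral>x. exp (c^2 * (real p - 1) / 2) * H (\<lambda>\<iota>. x (Some \<iota>)) \<partial>gauss ?I2)"
  proof (rule Bochner_Integration.integral_cong[OF refl])
    fix x :: "(nat \<Rightarrow> 'n) option \<Rightarrow> real"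
    have Gx: "G (x(None := y)) = H (\<lambda>\<iota>. x (Some \<iota>)) * exp ((c * ?s) * y)" for y
    proof -
      have "Max ((\<lambda>j. ?s * y + Xf p (\<lambda>\<iota>. x (Some \<iota>)) (d j)) ` J) = Max ((\<lambda>j. Xf p (\<lambda>\<iota>. x (Some \<iota>)) (d j)) ` J) + ?s * y"
        using Max_add_commute[OF J, of "\<lambda>j. Xf p (\<lambda>\<iota>. x (Some \<iota>)) (d j)" "?s * y"] by (simp add: add.commute)
      then show ?thesis unfolding G_def H_def by (simp add: exp_add[symmetric] algebra_simps)
    qed
    have "(\<integral>y. G (x(None := y)) \<partial>std_normal) = H (\<lambda>\<iota>. x (Some \<iota>)) * (\<integral>y. exp ((c * ?s) * y) \<partial>std_normal)"
      unfolding Gx by (simp add: integral_mult_right_zero)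
    also have "\<dots> = H (\<lambda>\<iota>. x (Some \<iota>)) * exp ((c * ?s)^2 / 2)"
      by (simp add: std_normal_mgf)
    also have "(c * ?s)^2 = c^2 * (real p - 1)"
      using p by (simp add: power_mult_distrib)
    also have "H (\<lambda>\<iota>. x (Some \<iota>)) * exp (c^2 * (real p - 1) / 2) = exp (c^2 * (real p - 1) / 2) * H (\<lambda>\<iota>. x (Some \<iota>))"
      by (rule mult.commute)
    finally show "(\<integral>y. G (x(None := y)) \<partial>std_normal) = exp (c^2 * (real p - 1) / 2) * H (\<lambda>\<iota>. x (Some \<iota>))" .
  qed
  also have "\<dots> = exp (c^2 * (real p - 1) / 2) * (\<integral>x. H (\<lambda>\<iota>. x (Some \<iota>)) \<partial>gauss ?I2)"
    by (simp add: integral_mult_right_zero)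
  also have "(\<integral>x. H (\<lambda>\<iota>. x (Some \<iota>)) \<partial>gauss ?I2) = integral\<^sup>L (gauss (Ix p)) H"
  proof -
    have "integral\<^sup>L (gauss (Ix p)) H = (\<integral>x. H (\<lambda>n\<in>Ix p. x (Some n)) \<partial>gauss ?I2)"
      by (rule integral_gauss_reindex[OF _ _ Hm]) (auto simp: inj_on_def)
    also have "\<dots> = (\<integral>x. H (\<lambda>\<iota>. x (Some \<iota>)) \<partial>gauss ?I2)"
    proof -
      have "H (\<lambda>n\<in>Ix p. x (Some n)) = H (\<lambda>\<iota>. x (Some \<iota>))" for x :: "(nat \<Rightarrow> 'n) option \<Rightarrow> real"
      proof -
        have "Xf p (\<lambda>n\<in>Ix p. x (Some n)) y = Xf p (\<lambda>\<iota>. x (Some \<iota>)) y" for y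
          unfolding Xf_def by (intro sum.cong refl) auto
        then show ?thesis unfolding H_def by simp
      qed
      then show ?thesis by simp
    qed
    finally show ?thesis by simp
  qed
  finally show ?thesis unfolding LW1 H_def .
qed

lemma finite_ineq:
  fixes d :: "nat \<Rightarrow> real ^ 'n::finite" and c :: real
  assumes p: "p > 0" "even p" and J: "finite J" "J \<noteq> {}"
    and dS: "\<And>j. j \<in> J \<Longrightarrow> d j \<in> sphere 0 1" and c: "0 < c"
  shows "exp (c^2 * (real p - 1) / 2) * integral\<^sup>L (gauss (Ix p :: (nat \<Rightarrow> 'n) set)) (\<lambda>A. exp (c * Max ((\<lambda>j. Xf p A (d j)) ` J)))
       \<le> integral\<^sup>L (gauss (UNIV :: 'n set)) (\<lambda>g. exp (c * Max ((\<lambda>j. sqrt (real p) * Yf g (d j)) ` J)))"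
proof -
  have A: "integral\<^sup>L (gauss (WW p)) (\<lambda>u. exp (c * Max ((\<lambda>j. lin (WW p) (aa p d j) u) ` J)))
       \<le> integral\<^sup>L (gauss (WW p :: ((nat \<Rightarrow> 'n) option + 'n) set)) (\<lambda>u. exp (c * Max ((\<lambda>j. lin (WW p) (bb p d j) u) ` J)))"
    by (rule finite_core) (use p J dS c in auto)
  have B: "integral\<^sup>L (gauss (WW p)) (\<lambda>u. exp (c * Max ((\<lambda>j. lin (WW p) (aa p d j) u) ` J)))
       = exp (c^2 * (real p - 1) / 2) * integral\<^sup>L (gauss (Ix p :: (nat \<Rightarrow> 'n) set)) (\<lambda>A. exp (c * Max ((\<lambda>j. Xf p A (d j)) ` J)))"
    by (rule LW_eq) (use p J dS c in auto)
  show ?thesis using A unfolding B RW_eq[OF J(1)] .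
qed

lemma sup_approx:
  fixes f :: "real ^ 'n::finite \<Rightarrow> real" and d :: "nat \<Rightarrow> real ^ 'n"
  assumes cont: "continuous_on UNIV f" and dS: "range d \<subseteq> S" and cl: "S \<subseteq> closure (range d)"
    and bdd: "bdd_above (f ` S)"
  shows "(\<lambda>k. Max ((\<lambda>j. f (d j)) ` {..k})) \<longlonglongrightarrow> (SUP x\<in>S. f x)"
proof (rule metric_LIMSEQ_I)
  fix e :: real assume e: "0 < e"
  let ?L = "SUP x\<in>S. f x"
  have Sne: "S \<noteq> {}" using dS by auto
  have up: "Max ((\<lambda>j. f (d j)) ` {..k}) \<le> ?L" for k
    using dS by (auto intro!: cSUP_upper bdd)
  have "?L - e < ?L" using e by simp
  then obtain x where x: "x \<in> S" "?L - e < f x"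
    using less_cSUP_iff[OF Sne bdd] by blast
  have "open {y. ?L - e < f y}"
    using cont by (intro open_Collect_less) (auto intro: continuous_intros)
  moreover have "x \<in> closure (range d)" using x cl by auto
  ultimately have "{y. ?L - e < f y} \<inter> range d \<noteq> {}"
    using x unfolding closure_iff_nhds_not_empty by blast
  then obtain j0 where j0: "?L - e < f (d j0)" by auto
  show "\<exists>no. \<forall>k\<ge>no. dist (Max ((\<lambda>j. f (d j)) ` {..k})) ?L < e"
  proof (intro exI allI impI)
    fix k assume k: "j0 \<le> k"
    have "f (d j0) \<le> Max ((\<lambda>j. f (d j)) ` {..k})" using k by (intro Max_ge) auto
    then show "dist (Max ((\<lambda>j. f (d j)) ` {..k})) ?L < e"
      using up[of k] j0 by (simp add: dist_real_def)
  qed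
qed

lemma sphere_comp_le1: "x \<in> sphere (0::real^'n::finite) 1 \<Longrightarrow> \<bar>x $ i\<bar> \<le> 1"
  using component_le_norm_cart[of x i] by simp

lemma Xf_bound:
  assumes "x \<in> sphere (0::real^'n::finite) 1"
  shows "\<bar>Xf p A x\<bar> \<le> (\<Sum>\<iota>\<in>Ix p. \<bar>A \<iota>\<bar>)"
proof -
  have "\<bar>Xf p A x\<bar> \<le> (\<Sum>\<iota>\<in>Ix p. \<bar>A \<iota>\<bar> * (\<Prod>k<p. \<bar>x $ \<iota> k\<bar>))"
    unfolding Xf_def by (rule order_trans[OF sum_abs]) (simp add: abs_mult abs_prod)
  also have "\<dots> \<le> (\<Sum>\<iota>\<in>Ix p. \<bar>A \<iota>\<bar> * 1)"
    using assms by (intro sum_mono mult_left_mono prod_le_1) (auto intro: sphere_comp_le1)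
  finally show ?thesis by simp
qed

lemma Yf_bound:
  assumes "x \<in> sphere (0::real^'n::finite) 1"
  shows "\<bar>Yf g x\<bar> \<le> (\<Sum>i\<in>UNIV. \<bar>g i\<bar>)"
proof -
  have "\<bar>Yf g x\<bar> \<le> (\<Sum>i\<in>UNIV. \<bar>g i\<bar> * \<bar>x $ i\<bar>)"
    unfolding Yf_def by (rule order_trans[OF sum_abs]) (simp add: abs_mult)
  also have "\<dots> \<le> (\<Sum>i\<in>UNIV. \<bar>g i\<bar> * 1)"
    using assms by (intro sum_mono mult_left_mono) (auto intro: sphere_comp_le1)
  finally show ?thesis by simp
qed

lemma Xf_cont: "continuous_on UNIV (Xf p A)"
  unfolding Xf_def by (intro continuous_intros)

lemma Yf_cont: "continuous_on UNIV (Yf g)"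
  unfolding Yf_def by (intro continuous_intros)

theorem corollary2:
  fixes p :: nat and S :: "(real ^ 'n::finite) set" and c3 :: real
  assumes "p > 0" and "even p"
    and "S \<subseteq> sphere 0 1" and "S \<noteq> {}"
    and "c3 > 0"
  shows "xi_l0 p S c3 \<le> xi_u0 p S c3"
proof -
  note p = assms(1,2) and SS = assms(3) and Sne = assms(4)
  define c where "c = c3"
  have c: "0 < c" using assms(5) c_def by simp
  obtain T where T: "countable T" "T \<subseteq> S" "S \<subseteq> closure T" by (rule separable)
  have Tne: "T \<noteq> {}" using T Sne by auto
  define d where "d = from_nat_into T"
  have rd: "range d = T" unfolding d_def by (rule range_from_nat_into[OF Tne T(1)])
  have dS: "d j \<in> sphere 0 1" for j
  proof -
    have "d j \<in> S" using rd T(2) by blast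
    then show ?thesis using SS by blast
  qed
  define EL0 where "EL0 A = exp (c * (SUP x\<in>S. Xf p A x))" for A :: "(nat \<Rightarrow> 'n) \<Rightarrow> real"
  define EU0 where "EU0 g = exp (c * sqrt (real p) * (SUP x\<in>S. Yf g x))" for g :: "'n \<Rightarrow> real"
  define XL where "XL k A = exp (c * Max ((\<lambda>j. Xf p A (d j)) ` {..k}))" for k and A :: "(nat \<Rightarrow> 'n) \<Rightarrow> real"
  define XU where "XU k g = exp (c * Max ((\<lambda>j. sqrt (real p) * Yf g (d j)) ` {..k}))" for k and g :: "'n \<Rightarrow> real"
  let ?a = "exp (c^2 * (real p - 1) / 2)"
  have bddX: "bdd_above (Xf p A ` S)" for A
    by (rule bdd_aboveI[where M="\<Sum>\<iota>\<in>Ix p. \<bar>A \<iota>\<bar>"]) (use Xf_bound SS in \<open>fastforce simp: abs_le_iff\<close>)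
  have bddY: "bdd_above (Yf g ` S)" for g
    by (rule bdd_aboveI[where M="\<Sum>i\<in>UNIV. \<bar>g i\<bar>"]) (use Yf_bound SS in \<open>fastforce simp: abs_le_iff\<close>)
  have limL: "(\<lambda>k. XL k A) \<longlonglongrightarrow> EL0 A" for A
    unfolding XL_def EL0_def
    by (intro tendsto_intros sup_approx[OF Xf_cont _ _ bddX]) (use rd T in auto)
  have MaxY: "Max ((\<lambda>j. sqrt (real p) * Yf g (d j)) ` {..k}) = sqrt (real p) * Max ((\<lambda>j. Yf g (d j)) ` {..k})" for g k
  proof -
    have "mono (\<lambda>t. sqrt (real p) * t)" by (intro monoI mult_left_mono) auto
    then have "sqrt (real p) * Max ((\<lambda>j. Yf g (d j)) ` {..k}) = Max ((\<lambda>t. sqrt (real p) * t) ` ((\<lambda>j. Yf g (d j)) ` {..k}))"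
      by (rule mono_Max_commute) auto
    then show ?thesis by (simp add: image_image)
  qed
  have limU: "(\<lambda>k. XU k g) \<longlonglongrightarrow> EU0 g" for g
    unfolding XU_def EU0_def MaxY mult.assoc
    by (intro tendsto_intros sup_approx[OF Yf_cont _ _ bddY]) (use rd T in auto)
  have XLm[measurable]: "XL k \<in> borel_measurable (gauss (Ix p))" for k
    unfolding XL_def by measurable
  have XUm[measurable]: "XU k \<in> borel_measurable (gauss (UNIV :: 'n set))" for k
    unfolding XU_def by measurable
  have EL0m[measurable]: "EL0 \<in> borel_measurable (gauss (Ix p))"
    by (rule borel_measurable_LIMSEQ_real[OF limL XLm])
  have EU0m[measurable]: "EU0 \<in> borel_measurable (gauss (UNIV :: 'n set))"
    by (rule borel_measurable_LIMSEQ_real[OF limU XUm])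
  have wL: "integrable (gauss (Ix p :: (nat \<Rightarrow> 'n) set)) (\<lambda>A. exp (c * (\<Sum>\<iota>\<in>Ix p. \<bar>A \<iota>\<bar>)))"
    by (rule integrable_gauss_exp) (rule finite_Ix)
  have wU: "integrable (gauss (UNIV :: 'n set)) (\<lambda>g. exp ((c * sqrt (real p)) * (\<Sum>i\<in>UNIV. \<bar>g i\<bar>)))"
    by (rule integrable_gauss_exp) simp
  have bL: "norm (XL k A) \<le> exp (c * (\<Sum>\<iota>\<in>Ix p. \<bar>A \<iota>\<bar>))" for k A
  proof -
    have "Max ((\<lambda>j. Xf p A (d j)) ` {..k}) \<le> (\<Sum>\<iota>\<in>Ix p. \<bar>A \<iota>\<bar>)"
      using Xf_bound[OF dS] by (auto simp: abs_le_iff)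
    then show ?thesis unfolding XL_def using c by simp
  qed
  have bU: "norm (XU k g) \<le> exp ((c * sqrt (real p)) * (\<Sum>i\<in>UNIV. \<bar>g i\<bar>))" for k g
  proof -
    have "Max ((\<lambda>j. Yf g (d j)) ` {..k}) \<le> (\<Sum>i\<in>UNIV. \<bar>g i\<bar>)"
      using Yf_bound[OF dS] by (auto simp: abs_le_iff)
    then have "c * (sqrt (real p) * Max ((\<lambda>j. Yf g (d j)) ` {..k})) \<le> (c * sqrt (real p)) * (\<Sum>i\<in>UNIV. \<bar>g i\<bar>)"
      using c by (simp add: mult.assoc mult_left_mono)
    then show ?thesis unfolding XU_def MaxY by simp
  qed
  have ilimL: "(\<lambda>k. integral\<^sup>L (gauss (Ix p)) (XL k)) \<longlonglongrightarrow> integral\<^sup>L (gauss (Ix p)) EL0"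
    by (rule integral_dominated_convergence[OF EL0m XLm wL]) (use limL bL in \<open>auto intro!: AE_I2\<close>)
  have ilimU: "(\<lambda>k. integral\<^sup>L (gauss (UNIV :: 'n set)) (XU k)) \<longlonglongrightarrow> integral\<^sup>L (gauss (UNIV :: 'n set)) EU0"
    by (rule integral_dominated_convergence[OF EU0m XUm wU]) (use limU bU in \<open>auto intro!: AE_I2\<close>)
  have fin: "?a * integral\<^sup>L (gauss (Ix p)) (XL k) \<le> integral\<^sup>L (gauss (UNIV :: 'n set)) (XU k)" for k
    unfolding XL_def XU_def by (rule finite_ineq) (use p c dS in auto)
  have main: "?a * integral\<^sup>L (gauss (Ix p)) EL0 \<le> integral\<^sup>L (gauss (UNIV :: 'n set)) EU0"
    by (rule LIMSEQ_le[OF tendsto_mult_left[OF ilimL] ilimU]) (use fin in auto)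
  have iEL0: "integrable (gauss (Ix p)) EL0"
  proof (rule Bochner_Integration.integrable_bound[OF wL EL0m])
    show "AE A in gauss (Ix p). norm (EL0 A) \<le> norm (exp (c * (\<Sum>\<iota>\<in>Ix p. \<bar>A \<iota>\<bar>)))"
    proof (intro AE_I2)
      fix A :: "(nat \<Rightarrow> 'n) \<Rightarrow> real"
      have "norm (EL0 A) \<le> exp (c * (\<Sum>\<iota>\<in>Ix p. \<bar>A \<iota>\<bar>))"
        by (rule LIMSEQ_le_const2[OF tendsto_norm[OF limL]]) (use bL in auto)
      then show "norm (EL0 A) \<le> norm (exp (c * (\<Sum>\<iota>\<in>Ix p. \<bar>A \<iota>\<bar>)))" by simp
    qed
  qed
  interpret PG: prob_space "gauss (Ix p :: (nat \<Rightarrow> 'n) set)" by (rule prob_space_gauss)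
  have ELpos: "0 < integral\<^sup>L (gauss (Ix p)) EL0"
  proof -
    have nn: "0 \<le> integral\<^sup>L (gauss (Ix p)) EL0"
      by (intro integral_nonneg_AE AE_I2) (simp add: EL0_def)
    have "integral\<^sup>L (gauss (Ix p)) EL0 \<noteq> 0"
    proof
      assume "integral\<^sup>L (gauss (Ix p)) EL0 = 0"
      then have "AE A in gauss (Ix p). EL0 A = 0"
        using integral_nonneg_eq_0_iff_AE[OF iEL0] by (simp add: EL0_def)
      then have "AE A in gauss (Ix p). False" by (simp add: EL0_def)
      then show False using prob_space.AE_False[OF prob_space_gauss] by blast
    qed
    with nn show ?thesis by simp
  qed
  have EUpos: "0 < integral\<^sup>L (gauss (UNIV :: 'n set)) EU0"
  proof -
    have "0 < ?a * integral\<^sup>L (gauss (Ix p)) EL0" using ELpos by simp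
    then show ?thesis using main by linarith
  qed
  have lnineq: "ln (integral\<^sup>L (gauss (Ix p)) EL0) + c^2 * (real p - 1) / 2 \<le> ln (integral\<^sup>L (gauss (UNIV :: 'n set)) EU0)"
  proof -
    have "ln (?a * integral\<^sup>L (gauss (Ix p)) EL0) \<le> ln (integral\<^sup>L (gauss (UNIV :: 'n set)) EU0)"
      using main ELpos EUpos by (subst ln_le_cancel_iff) auto
    then show ?thesis using ELpos by (simp add: ln_mult)
  qed
  have key: "(1 / c) * ln (integral\<^sup>L (gauss (Ix p)) EL0) \<le> - (c / 2) * (real p - 1) + (1 / c) * ln (integral\<^sup>L (gauss (UNIV :: 'n set)) EU0)"
  proof -
    let ?l = "ln (integral\<^sup>L (gauss (Ix p)) EL0)"
    let ?u = "ln (integral\<^sup>L (gauss (UNIV :: 'n set)) EU0)"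
    have "?l \<le> ?u - c^2 * (real p - 1) / 2" using lnineq by linarith
    then have "(1 / c) * ?l \<le> (1 / c) * (?u - c^2 * (real p - 1) / 2)"
      using c by (intro mult_left_mono) auto
    also have "(1 / c) * (?u - c^2 * (real p - 1) / 2) = - (c / 2) * (real p - 1) + (1 / c) * ?u"
      using c by (simp add: field_simps power2_eq_square)
    finally show ?thesis .
  qed
  have xl: "xi_l0 p S c3 = sqrt (real p) / sqrt (real CARD('n)) * ((1 / c) * ln (integral\<^sup>L (gauss (Ix p)) EL0))"
    unfolding xi_l0_def EL0_def Ix_def Xf_def c_def by simp
  have xu: "xi_u0 p S c3 = sqrt (real p) / sqrt (real CARD('n)) * (- (c / 2) * (real p - 1) + (1 / c) * ln (integral\<^sup>L (gauss (UNIV :: 'n set)) EU0))"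
    unfolding xi_u0_def EU0_def Yf_def c_def by simp
  show ?thesis unfolding xl xu by (intro mult_left_mono key) auto
qed

end
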